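(* Let $n\ge1$, $p>0$, $\alpha>n$, $0<\rho<1$, let $f=1+\phi$ be holomorphic in $\mathbb{B}_n$ with $\|\phi\|_{C^1(\overline{\mathbb{B}_\rho})}$ sufficiently small (where $\mathbb{B}_\rho=\{|z|<\rho\}$), and let $u(z)=|f(z)|^p(1-|z|^2)^\alpha$, $A_t=\{u>t\}$. Assume $t$ ranges over a compact interval $[t_-,t_+]$ such that $0<\rho_-\le\rho_0(t)\le\rho_+<\rho$, where $\rho_0(t)=\sqrt{1-t^{1/\alpha}}$, and that $\partial A_t=\{\rho_t(\omega)\omega:\omega\in\mathbb{S}^{2n-1}\}$ with $\rho_t$ taking values in $[\rho_-/2,(\rho_++\rho)/2]$ and $\|\rho_t-\rho_0(t)\|_{W^{1,\infty}(\mathbb{S}^{2n-1})}\le C\|\phi\|_{C^1(\overline{\mathbb{B}_\rho})}$. Then, after possibly shrinking $[t_-,t_+]$, $$|\mathrm{Bar}(A_t)|\le C\|\phi\|_{C^1(\overline{\mathbb{B}_\rho})}\quad\text{for all }t\in[t_-,t_+],$$ where $C=C(n,p,\alpha,\rho_-,\rho_+,\rho)$.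
   Context: $\mathbb{B}_n$ is the unit ball of $\mathbb{C}^n$, $\mathbb{S}^{2n-1}$ its boundary, $d\mu=(1-|z|^2)^{-n-1}d\nu$ the Bergman measure ($d\nu$ Lebesgue). For measurable $E\subset\mathbb{B}_n$ with $0<\mu(E)<\infty$, the holomorphic (Jacimovic–Kalaj) barycenter $\mathrm{Bar}(E)$ is the unique minimizer over $a\in\mathbb{B}_n$ of $L_E(a)=-\int_E\log\frac{(1-|a|^2)(1-|z|^2)}{|1-\langle a,z\rangle|^2}d\mu(z)$. *)

theory Defs
  imports "HOL-Analysis.Analysis"
begin

definition cinner :: "complex ^ 'n \<Rightarrow> complex ^ 'n \<Rightarrow> complex" where
  "cinner a z = (\<Sum>i\<in>UNIV. a $ i * cnj (z $ i))"

definition holo_on :: "(complex ^ 'n) set \<Rightarrow> (complex ^ 'n \<Rightarrow> complex) \<Rightarrow> bool" where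
  "holo_on S f \<longleftrightarrow> (\<forall>z\<in>S. \<exists>D. (f has_derivative D) (at z) \<and> (\<forall>c v. D (c *s v) = c * D v))"

definition c1_norm :: "real \<Rightarrow> (complex ^ 'n \<Rightarrow> complex) \<Rightarrow> real" where
  "c1_norm r f = (SUP z\<in>cball 0 r. norm (f z)) + (SUP z\<in>cball 0 r. onorm (frechet_derivative f (at z)))"

text \<open>W^{1,infinity}(S^{2n-1}) norm bound, realised as sup-norm plus Lipschitz constant
  (with respect to the chordal distance) of the function on the unit sphere.\<close>
definition w1inf_le :: "(complex ^ 'n \<Rightarrow> real) \<Rightarrow> real \<Rightarrow> bool" where
  "w1inf_le g M \<longleftrightarrow> (\<exists>a b. a + b \<le> M \<and> (\<forall>\<omega>\<in>sphere 0 1. \<bar>g \<omega>\<bar> \<le> a) \<and>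
       (\<forall>\<omega>\<in>sphere 0 1. \<forall>\<omega>'\<in>sphere 0 1. \<bar>g \<omega> - g \<omega>'\<bar> \<le> b * dist \<omega> \<omega>'))"

definition bergman_dens :: "complex ^ 'n \<Rightarrow> real" where
  "bergman_dens z = (1 - (norm z)\<^sup>2) powr (- (real CARD('n) + 1))"

definition L_fun :: "(complex ^ 'n) set \<Rightarrow> complex ^ 'n \<Rightarrow> real" where
  "L_fun E a = - (LINT z:E|lborel.
      ln ((1 - (norm a)\<^sup>2) * (1 - (norm z)\<^sup>2) / (cmod (1 - cinner a z))\<^sup>2) * bergman_dens z)"

definition Bar :: "(complex ^ 'n) set \<Rightarrow> complex ^ 'n" where
  "Bar E = (THE a. a \<in> ball 0 1 \<and> (\<forall>b\<in>ball 0 1. L_fun E a \<le> L_fun E b))"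

definition u_fun :: "real \<Rightarrow> real \<Rightarrow> (complex ^ 'n \<Rightarrow> complex) \<Rightarrow> complex ^ 'n \<Rightarrow> real" where
  "u_fun p \<alpha> \<phi> z = (norm (1 + \<phi> z)) powr p * (1 - (norm z)\<^sup>2) powr \<alpha>"

definition A_set :: "real \<Rightarrow> real \<Rightarrow> (complex ^ 'n \<Rightarrow> complex) \<Rightarrow> real \<Rightarrow> (complex ^ 'n) set" where
  "A_set p \<alpha> \<phi> t = {z \<in> ball 0 1. u_fun p \<alpha> \<phi> z > t}"

definition rho0 :: "real \<Rightarrow> real \<Rightarrow> real" where
  "rho0 \<alpha> t = sqrt (1 - t powr (1 / \<alpha>))"

end

theory Submission
  imports Defs "HOL-Complex_Analysis.Complex_Analysis"
begin

lemma cinner_bound: "norm (cinner a z) \<le> norm a * norm (z::complex^'n)"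
proof -
  have "norm (cinner a z) \<le> (\<Sum>i\<in>UNIV. norm (a$i) * norm (z$i))"
    unfolding cinner_def by (rule order_trans[OF norm_sum]) (simp add: norm_mult)
  also have "\<dots> = (\<Sum>i\<in>UNIV. \<bar>norm (a$i)\<bar> * \<bar>norm (z$i)\<bar>)" by simp
  also have "\<dots> \<le> L2_set (\<lambda>i. norm (a$i)) UNIV * L2_set (\<lambda>i. norm (z$i)) UNIV"
    by (rule L2_set_mult_ineq)
  also have "\<dots> = norm a * norm z" by (simp add: norm_vec_def)
  finally show ?thesis .
qed

lemma cinner_add: "cinner (a + b) z = cinner a z + cinner b z"
  unfolding cinner_def by (simp add: distrib_right sum.distrib)
lemma cinner_diff: "cinner (a - b) z = cinner a z - cinner b z"
  unfolding cinner_def by (simp add: left_diff_distrib sum_subtractf)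
lemma cinner_scaleR: "cinner (c *\<^sub>R a) z = of_real c * cinner a z"
proof -
  have "\<And>i. (c *\<^sub>R a) $ i = of_real c * a $ i" unfolding vector_scaleR_component by (rule scaleR_conv_of_real)
  then show ?thesis unfolding cinner_def by (simp add: sum_distrib_left mult.assoc)
qed
lemma cinner_uminus_right: "cinner a (- z) = - cinner a z"
  unfolding cinner_def by (simp add: sum_negf)
lemma cinner_zero_left [simp]: "cinner 0 z = 0"
  unfolding cinner_def by simp

lemma ln_ge_aux: "0 < y \<Longrightarrow> 1 - 1 / y \<le> ln (y::real)"
proof -
  assume y: "0 < y"
  have "ln (1/y) \<le> 1/y - 1" using y by (intro ln_le_minus_one) simp
  then show ?thesis using y by (simp add: ln_div)
qed

lemma G_abs_bound:
  fixes e :: complex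
  assumes "norm e < 1"
  shows "\<bar>ln (cmod (1 - e))\<bar> \<le> norm e / (1 - norm e)"
proof -
  have lo: "1 - norm e \<le> cmod (1 - e)"
    by (metis norm_one norm_triangle_ineq2)
  have hi: "cmod (1 - e) \<le> 1 + norm e"
    by (metis norm_one norm_triangle_ineq4)
  have pos: "0 < 1 - norm e" using assms by simp
  have "ln (cmod (1 - e)) \<le> ln (1 + norm e)" using lo hi pos by (intro ln_mono) auto
  also have "\<dots> \<le> norm e" by (intro ln_add_one_self_le_self) simp
  also have "\<dots> \<le> norm e / (1 - norm e)" using pos assms
    by (simp add: le_divide_eq mult_left_le)
  finally have 1: "ln (cmod (1 - e)) \<le> norm e / (1 - norm e)" .
  have "1 - 1 / (1 - norm e) \<le> ln (1 - norm e)" using pos by (rule ln_ge_aux)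
  also have "\<dots> \<le> ln (cmod (1 - e))" using lo pos by (intro ln_mono) auto
  finally have "- (norm e / (1 - norm e)) \<le> ln (cmod (1 - e))"
    using pos by (simp add: field_simps)
  with 1 show ?thesis by linarith
qed

lemma G_lower_bound:
  fixes e :: complex
  assumes "norm e < 1"
  shows "- (norm e / (1 - norm e)) \<le> ln (cmod (1 - e))"
  using G_abs_bound[OF assms] by linarith

lemma G_abs_bound2:
  fixes e :: complex
  assumes "norm e \<le> 1/2"
  shows "\<bar>ln (cmod (1 - e))\<bar> \<le> 2 * norm e"
proof -
  have "\<bar>ln (cmod (1 - e))\<bar> \<le> norm e / (1 - norm e)" using assms by (intro G_abs_bound) auto
  also have "\<dots> \<le> 2 * norm e" using assms by (simp add: divide_le_eq algebra_simps mult_left_le)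
  finally show ?thesis .
qed

lemma G_lipschitz:
  fixes v1 v2 :: complex
  assumes "norm v1 \<le> 1/2" "norm v2 \<le> 1/2"
  shows "\<bar>ln (cmod (1 - v1)) - ln (cmod (1 - v2))\<bar> \<le> 2 * norm (v1 - v2)"
proof -
  define x where "x = cmod (1 - v1)"
  define y where "y = cmod (1 - v2)"
  have x: "x \<ge> 1/2" unfolding x_def using assms(1) norm_triangle_ineq2[of 1 v1] by simp
  have y: "y \<ge> 1/2" unfolding y_def using assms(2) norm_triangle_ineq2[of 1 v2] by simp
  have xy: "\<bar>x - y\<bar> \<le> norm (v1 - v2)" unfolding x_def y_def
    using norm_triangle_ineq3[of "1 - v1" "1 - v2"] by (simp add: norm_minus_commute)
  have "ln x - ln y = ln (x / y)" using x y by (simp add: ln_div)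
  also have "\<dots> \<le> x / y - 1" using x y by (intro ln_le_minus_one) simp
  also have "\<dots> = (x - y) / y" using y by (simp add: field_simps)
  also have "\<dots> \<le> \<bar>x - y\<bar> / y" using y by (intro divide_right_mono) auto
  also have "\<dots> = \<bar>x - y\<bar> * (1 / y)" by simp
  also have "\<dots> \<le> \<bar>x - y\<bar> * 2" using y by (intro mult_left_mono) (auto simp: divide_le_eq)
  finally have 1: "ln x - ln y \<le> \<bar>x - y\<bar> * 2" .
  have "ln y - ln x = ln (y / x)" using x y by (simp add: ln_div)
  also have "\<dots> \<le> y / x - 1" using x y by (intro ln_le_minus_one) simp
  also have "\<dots> = (y - x) / x" using x by (simp add: field_simps)
  also have "\<dots> \<le> \<bar>x - y\<bar> / x" using x by (intro divide_right_mono) auto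
  also have "\<dots> = \<bar>x - y\<bar> * (1 / x)" by simp
  also have "\<dots> \<le> \<bar>x - y\<bar> * 2" using x by (intro mult_left_mono) (auto simp: divide_le_eq)
  finally have 2: "ln y - ln x \<le> \<bar>x - y\<bar> * 2" .
  have a1: "ln x - ln y \<le> 2 * norm (v1 - v2)" using 1 xy by simp
  have a2: "ln y - ln x \<le> 2 * norm (v1 - v2)" using 2 xy by simp
  have "\<bar>ln x - ln y\<bar> \<le> 2 * norm (v1 - v2)" using a1 a2 by (simp add: abs_le_iff)
  then show ?thesis by (simp add: x_def y_def)
qed

lemma norm_half_sum: "norm (v1::complex) \<le> \<eta> \<Longrightarrow> norm v2 \<le> \<eta> \<Longrightarrow> norm ((v1 + v2)/2) \<le> \<eta>"
  using norm_triangle_ineq[of v1 v2] by (simp add: norm_divide)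
lemma norm_half_diff: "norm (v1::complex) \<le> \<eta> \<Longrightarrow> norm v2 \<le> \<eta> \<Longrightarrow> norm ((v1 - v2)/2) \<le> \<eta>"
  using norm_triangle_ineq4[of v1 v2] by (simp add: norm_divide)

lemma G_defect_eq:
  fixes v1 v2 :: complex
  assumes "norm v1 \<le> 1/2" "norm v2 \<le> 1/2"
  shows "ln (cmod (1 - v1)) + ln (cmod (1 - v2)) - 2 * ln (cmod (1 - (v1 + v2)/2))
       = ln (cmod (1 - ((v1 - v2)/2)^2 / (1 - (v1 + v2)/2)^2))"
proof -
  define m where "m = (v1 + v2)/2"
  define d where "d = (v1 - v2)/2"
  have nm: "norm m \<le> 1/2" unfolding m_def using assms by (rule norm_half_sum)
  have v1: "1 - v1 \<noteq> 0" using assms(1) by auto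
  have v2: "1 - v2 \<noteq> 0" using assms(2) by auto
  have m0: "1 - m \<noteq> 0" using nm by auto
  have v1e: "v1 = m + d" unfolding m_def d_def by (simp add: field_simps)
  have v2e: "v2 = m - d" unfolding m_def d_def by (simp add: field_simps)
  have e1: "(1 - v1) * (1 - v2) = (1 - m)^2 - d^2" unfolding v1e v2e by (simp add: power2_eq_square algebra_simps)
  have e2: "(1 - m)^2 * (1 - d^2 / (1 - m)^2) = (1 - m)^2 - d^2" using m0 by (simp add: right_diff_distrib)
  have eq: "(1 - v1) * (1 - v2) = (1 - m)^2 * (1 - d^2 / (1 - m)^2)" using e1 e2 by simp
  have ne: "1 - d^2 / (1 - m)^2 \<noteq> 0" using eq v1 v2 by auto
  have "ln (cmod (1 - v1)) + ln (cmod (1 - v2)) = ln (cmod ((1 - v1) * (1 - v2)))"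
    using v1 v2 by (simp add: norm_mult ln_mult)
  also have "\<dots> = ln (cmod (1 - m)^2) + ln (cmod (1 - d^2 / (1 - m)^2))"
    using m0 ne by (simp add: eq norm_mult norm_power ln_mult)
  also have "ln (cmod (1 - m)^2) = 2 * ln (cmod (1 - m))"
    using m0 by (simp add: ln_realpow)
  finally show ?thesis unfolding m_def d_def by simp
qed

lemma G_defect_bounds:
  fixes v1 v2 :: complex and \<eta> :: real
  assumes "norm v1 \<le> \<eta>" "norm v2 \<le> \<eta>" "\<eta> \<le> 1/4"
  shows "\<bar>ln (cmod (1 - v1)) + ln (cmod (1 - v2)) - 2 * ln (cmod (1 - (v1 + v2)/2))\<bar> \<le> (norm (v1 - v2))^2"
    and "ln (cmod (1 - v1)) + ln (cmod (1 - v2)) - 2 * ln (cmod (1 - (v1 + v2)/2))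
          \<ge> - ((norm (v1 - v2))^2 / (4 * (1 - 2 * \<eta>)))"
proof -
  define m where "m = (v1 + v2)/2"
  define d where "d = (v1 - v2)/2"
  define e where "e = d^2 / (1 - m)^2"
  have eta0: "0 \<le> \<eta>" using assms(1) norm_ge_zero order_trans by blast
  have nm: "norm m \<le> \<eta>" unfolding m_def using assms by (intro norm_half_sum)
  have nd: "norm d \<le> \<eta>" unfolding d_def using assms by (intro norm_half_diff)
  have eq: "ln (cmod (1 - v1)) + ln (cmod (1 - v2)) - 2 * ln (cmod (1 - (v1 + v2)/2)) = ln (cmod (1 - e))"
    unfolding e_def m_def d_def using assms by (intro G_defect_eq) auto
  have lm: "1 - \<eta> \<le> cmod (1 - m)" using nm norm_triangle_ineq2[of 1 m] by simp
  have lm2: "(1 - \<eta>)^2 \<le> cmod (1 - m)^2" using lm assms eta0 by (intro power_mono) auto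
  have pos: "0 < (1 - \<eta>)^2" using assms by simp
  have pm: "0 < cmod (1 - m)^2" using lm2 pos by linarith
  have ne: "norm e \<le> norm d ^2 / (1 - \<eta>)^2"
    unfolding e_def norm_divide norm_power using lm2 pos pm
    by (intro divide_left_mono) (auto intro: mult_pos_pos)
  have nd2: "norm d ^2 \<le> \<eta>^2" using nd by (simp add: power_mono)
  have dd: "norm d ^2 = (norm (v1 - v2))^2 / 4" unfolding d_def by (simp add: norm_divide power_divide)
  have "norm d ^2 / (1 - \<eta>)^2 \<le> \<eta>^2 / (1 - \<eta>)^2" using nd2 pos by (simp add: divide_right_mono)
  also have n19: "\<dots> \<le> 1/9"
  proof -
    have "(3 * \<eta>)^2 \<le> (1 - \<eta>)^2" using assms eta0 by (intro power_mono) auto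
    then show ?thesis using pos by (simp add: divide_le_eq power_mult_distrib)
  qed
  finally have n19': "norm d ^2 / (1 - \<eta>)^2 \<le> 1/9" .
  then have ne9: "norm e \<le> 1/9" using ne by linarith
  show "\<bar>ln (cmod (1 - v1)) + ln (cmod (1 - v2)) - 2 * ln (cmod (1 - (v1 + v2)/2))\<bar> \<le> (norm (v1 - v2))^2"
  proof -
    have "\<bar>ln (cmod (1 - e))\<bar> \<le> 2 * norm e" using ne9 by (intro G_abs_bound2) auto
    also have "\<dots> \<le> 2 * (norm d ^2 / (1 - \<eta>)^2)" using ne by simp
    also have "\<dots> \<le> 2 * (norm d^2 * (16/9))"
    proof -
      have "(3/4)^2 \<le> (1 - \<eta>)^2" using assms eta0 by (intro power_mono) auto
      then have "(9/16) \<le> (1 - \<eta>)^2" by (simp add: power2_eq_square)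
      then have "norm d ^2 / (1 - \<eta>)^2 \<le> norm d ^2 / (9/16)"
        by (intro divide_left_mono) auto
      then show ?thesis by simp
    qed
    also have "\<dots> \<le> (norm (v1 - v2))^2" unfolding dd by simp
    finally show ?thesis using eq by simp
  qed
  show "ln (cmod (1 - v1)) + ln (cmod (1 - v2)) - 2 * ln (cmod (1 - (v1 + v2)/2))
          \<ge> - ((norm (v1 - v2))^2 / (4 * (1 - 2 * \<eta>)))"
  proof -
    define q where "q = norm d ^2 / (1 - \<eta>)^2"
    have q0: "0 \<le> q" unfolding q_def by simp
    have q1: "q < 1" using ne9 n19' unfolding q_def by linarith
    have "- (norm e / (1 - norm e)) \<le> ln (cmod (1 - e))" using ne9 by (intro G_lower_bound) auto
    moreover have "norm e / (1 - norm e) \<le> q / (1 - q)"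
      using ne q1 q0 unfolding q_def[symmetric]
      by (intro frac_le) auto
    moreover have "q / (1 - q) = norm d^2 / ((1 - \<eta>)^2 - norm d^2)"
    proof -
      have "1 - q = ((1 - \<eta>)^2 - norm d^2) / (1 - \<eta>)^2"
        unfolding q_def using pos by (simp add: diff_divide_distrib)
      then show ?thesis unfolding q_def using pos by simp
    qed
    moreover have "norm d^2 / ((1 - \<eta>)^2 - norm d^2) \<le> norm d^2 / (1 - 2 * \<eta>)"
    proof -
      have s1: "(1 - \<eta>)^2 = 1 - 2 * \<eta> + \<eta>^2" by (simp add: power2_diff)
      have s2: "1 - 2 * \<eta> \<le> (1 - \<eta>)\<^sup>2 - (cmod d)\<^sup>2" using nd2 s1 by linarith
      have s3: "0 < 1 - 2 * \<eta>" using assms by linarith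
      show ?thesis using s2 s3 by (intro divide_left_mono mult_pos_pos) auto
    qed
    ultimately have f: "- (norm d^2 / (1 - 2 * \<eta>)) \<le> ln (cmod (1 - e))" by linarith
    have "norm d^2 / (1 - 2 * \<eta>) = (norm (v1 - v2))^2 / (4 * (1 - 2 * \<eta>))"
      unfolding dd by (simp add: divide_divide_eq_left)
    then show ?thesis using eq f by simp
  qed
qed

lemma ln_concave_aux:
  fixes s t :: real
  assumes "0 \<le> s" "s < 1" "0 \<le> t" "t \<le> 1"
  shows "t * ln (1 - s) \<le> ln (1 - t * s)"
proof -
  have "(1 - t) * ln 1 + t * ln (1 - s) \<le> ln ((1 - t) *\<^sub>R 1 + t *\<^sub>R (1 - s))"
    using assms by (intro concave_onD[OF ln_concave]) auto
  then show ?thesis by (simp add: algebra_simps)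
qed

lemma h_defect:
  fixes a1 a2 :: "'a::real_inner"
  assumes "norm a1 < 1" "norm a2 < 1"
  shows "- ln (1 - norm a1 ^2) - ln (1 - norm a2 ^2) + 2 * ln (1 - norm ((a1 + a2)/\<^sub>R 2) ^2)
         \<ge> norm (a1 - a2)^2 / 2"
proof -
  define x1 where "x1 = norm a1 ^2"
  define x2 where "x2 = norm a2 ^2"
  define xm where "xm = norm ((a1 + a2)/\<^sub>R 2) ^2"
  define dd where "dd = norm (a1 - a2)^2 / 4"
  have x1: "0 \<le> x1" "x1 < 1" unfolding x1_def using assms by (auto simp: power_less_one_iff abs_square_less_1)
  have x2: "0 \<le> x2" "x2 < 1" unfolding x2_def using assms by (auto simp: abs_square_less_1)
  have xmn: "xm = norm (a1 + a2)^2 / 4" unfolding xm_def by (simp add: power2_eq_square)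
  have pl: "norm (a1 + a2)^2 + norm (a1 - a2)^2 = 2 * norm a1 ^2 + 2 * norm a2 ^2"
    by (simp add: power2_norm_eq_inner inner_add_left inner_add_right inner_diff_left inner_diff_right
        inner_commute)
  have par: "xm + dd = (x1 + x2) / 2"
    unfolding xmn dd_def x1_def x2_def using pl by simp
  have dd0: "0 \<le> dd" unfolding dd_def by simp
  have xm0: "0 \<le> xm" unfolding xm_def by simp
  have A0: "(1 - (x1 + x2)/2)^2 - (1 - x1) * (1 - x2) = ((x1 - x2)/2)^2"
    by (simp add: power2_eq_square algebra_simps divide_simps)
  have A1: "1 - xm - dd = 1 - (x1 + x2)/2" using par by linarith
  have A: "(1 - x1) * (1 - x2) \<le> (1 - xm - dd)^2"
    unfolding A1 using A0 zero_le_power2[of "(x1 - x2)/2"] by linarith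
  have hx: "(x1 + x2)/2 < 1" using x1 x2 by simp
  have p1: "0 < 1 - xm - dd" unfolding A1 using hx by simp
  have p2: "0 < 1 - xm" using p1 dd0 by linarith
  have B: "1 - xm - dd \<le> (1 - dd) * (1 - xm)"
    using dd0 xm0 by (simp add: algebra_simps)
  have dd1: "0 < 1 - dd" using p1 xm0 by linarith
  have "(1 - xm - dd)^2 \<le> ((1 - dd) * (1 - xm))^2" using B p1 by (intro power_mono) auto
  then have "(1 - x1) * (1 - x2) \<le> ((1 - dd) * (1 - xm))^2" using A by linarith
  then have "ln ((1 - x1) * (1 - x2)) \<le> ln (((1 - dd) * (1 - xm))^2)"
    using x1 x2 by (intro ln_mono) auto
  then have "ln (1 - x1) + ln (1 - x2) \<le> 2 * ln (1 - dd) + 2 * ln (1 - xm)"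
    using x1 x2 dd1 p2 by (simp add: ln_mult ln_realpow)
  moreover have "ln (1 - dd) \<le> - dd" using dd1 ln_le_minus_one[of "1 - dd"] by simp
  ultimately have "- ln (1 - x1) - ln (1 - x2) + 2 * ln (1 - xm) \<ge> 2 * dd" by linarith
  then show ?thesis unfolding x1_def x2_def xm_def dd_def by simp
qed

lemma cinner_cont: "continuous_on S (\<lambda>z. cinner a (z::complex^'n))"
  unfolding cinner_def by (intro continuous_intros)

lemma cinner_meas: "(\<lambda>z. cinner a (z::complex^'n)) \<in> borel_measurable borel"
  using cinner_cont[of UNIV a] by (intro borel_measurable_continuous_onI) simp

lemma nsq: "norm (z::'a::real_normed_vector) < 1 \<Longrightarrow> (norm z)^2 < 1"
  using power_strict_mono[of "norm z" 1 2] by simp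

lemma bd_pos: "norm (z::complex^'n) < 1 \<Longrightarrow> 0 < bergman_dens z"
  unfolding bergman_dens_def using nsq[of z] by simp

lemma bd_ge1: "norm (z::complex^'n) < 1 \<Longrightarrow> 1 \<le> bergman_dens z"
proof -
  assume z: "norm z < 1"
  have b: "0 < 1 - (norm z)^2" "1 - (norm z)^2 \<le> 1" using z nsq[of z] by auto
  have "(1 - (norm z)^2) powr (- (real CARD('n) + 1)) \<ge> 1 powr (- (real CARD('n) + 1))"
    using b by (intro powr_mono2') auto
  then show ?thesis unfolding bergman_dens_def by simp
qed

lemma bd_le: "norm (z::complex^'n) \<le> R \<Longrightarrow> R < 1 \<Longrightarrow>
   bergman_dens z \<le> (1 - R^2) powr (- (real CARD('n) + 1))"
proof -
  assume z: "norm z \<le> R" "R < 1"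
  have "(norm z)^2 \<le> R^2" using z by (intro power_mono) auto
  moreover have "0 < 1 - R^2"
  proof -
    have R0: "0 \<le> R" using z(1) norm_ge_zero order_trans by blast
    then show ?thesis using power_strict_mono[of R 1 2] z(2) by simp
  qed
  ultimately show ?thesis unfolding bergman_dens_def
    by (intro powr_mono2') auto
qed

lemma bd_cont: "R < 1 \<Longrightarrow> continuous_on (cball 0 R) (bergman_dens :: complex^'n \<Rightarrow> real)"
proof -
  assume R: "R < 1"
  have "\<forall>z\<in>cball (0::complex^'n) R. 0 < 1 - (norm z)^2"
  proof
    fix z :: "complex^'n" assume "z \<in> cball 0 R"
    then have "norm z < 1" using R by simp
    then show "0 < 1 - (norm z)^2" using nsq[of z] by simp
  qed
  then show ?thesis unfolding bergman_dens_def[abs_def]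
    by (intro continuous_on_powr' continuous_intros) auto
qed

lemma bd_meas: "(bergman_dens :: complex^'n \<Rightarrow> real) \<in> borel_measurable borel"
  unfolding bergman_dens_def[abs_def] by measurable

lemma INT:
  fixes f :: "complex^'n \<Rightarrow> real"
  assumes "E \<in> sets lborel" "E \<subseteq> cball 0 R" "continuous_on (cball 0 R) f"
  shows "set_integrable lborel E f"
proof -
  have "set_integrable lborel (cball 0 R) f"
    unfolding set_integrable_def using assms(3) by (intro borel_integrable_compact) auto
  then show ?thesis using assms(1,2) by (rule set_integrable_subset)
qed

lemma ABS:
  fixes f g :: "complex^'n \<Rightarrow> real"
  assumes "set_integrable lborel E f" "set_integrable lborel E g" "\<And>z. z \<in> E \<Longrightarrow> \<bar>f z\<bar> \<le> g z"
  shows "\<bar>LINT z:E|lborel. f z\<bar> \<le> (LINT z:E|lborel. g z)"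
proof -
  have 1: "(LINT z:E|lborel. f z) \<le> (LINT z:E|lborel. g z)"
    using assms by (intro set_integral_mono) (auto simp: abs_le_iff)
  have mf: "set_integrable lborel E (\<lambda>z. - f z)"
    using integrable_minus[OF assms(1)[unfolded set_integrable_def]] unfolding set_integrable_def by simp
  have "(LINT z:E|lborel. - f z) \<le> (LINT z:E|lborel. g z)"
    using assms mf by (intro set_integral_mono) (auto simp: abs_le_iff)
  then have 2: "- (LINT z:E|lborel. f z) \<le> (LINT z:E|lborel. g z)"
    using assms(1) by (simp add: set_integral_uminus)
  from 1 2 show ?thesis by (simp add: abs_le_iff)
qed

lemma content_ball0: "0 \<le> s \<Longrightarrow> measure lborel (ball (0::'a::euclidean_space) s) = unit_ball_vol DIM('a) * s ^ DIM('a)"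
  by (rule content_ball)
lemma content_cball0: "0 \<le> s \<Longrightarrow> measure lborel (cball (0::'a::euclidean_space) s) = unit_ball_vol DIM('a) * s ^ DIM('a)"
  by (rule content_cball)

lemma COMP:
  fixes f :: "complex^'n \<Rightarrow> real"
  assumes E: "E \<in> sets lborel" and B: "B \<in> sets lborel"
    and sub: "ball 0 r1 \<subseteq> E" "ball 0 r1 \<subseteq> B" "E \<subseteq> cball 0 r2" "B \<subseteq> cball 0 r2"
    and r: "r2 \<le> R"
    and f: "continuous_on (cball 0 R) f" and M: "\<And>z. z \<in> cball 0 R \<Longrightarrow> \<bar>f z\<bar> \<le> M"
  shows "\<bar>(LINT z:E|lborel. f z) - (LINT z:B|lborel. f z)\<bar>
           \<le> M * (measure lborel (cball (0::complex^'n) r2) - measure lborel (ball (0::complex^'n) r1))"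
proof -
  have sE: "E \<subseteq> cball 0 R" "B \<subseteq> cball 0 R" using sub r by auto
  have iE: "integrable lborel (\<lambda>x. indicator E x *\<^sub>R f x)"
    using INT[OF E sE(1) f] unfolding set_integrable_def .
  have iB: "integrable lborel (\<lambda>x. indicator B x *\<^sub>R f x)"
    using INT[OF B sE(2) f] unfolding set_integrable_def .
  have fin2: "emeasure lborel (cball (0::complex^'n) r2) < \<infinity>" by (rule emeasure_lborel_cball_finite)
  have fin1: "emeasure lborel (ball (0::complex^'n) r1) < \<infinity>" by (rule emeasure_lborel_ball_finite)
  have iC: "integrable lborel (\<lambda>x. M * (indicator (cball (0::complex^'n) r2) x - indicator (ball 0 r1) x))"
    using fin1 fin2 by (intro integrable_mult_right Bochner_Integration.integrable_diff integrable_real_indicator) auto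
  have "(LINT z:E|lborel. f z) - (LINT z:B|lborel. f z)
        = (LINT x|lborel. (indicator E x *\<^sub>R f x - indicator B x *\<^sub>R f x))"
    unfolding set_lebesgue_integral_def using iE iB by (simp add: Bochner_Integration.integral_diff)
  also have "\<bar>\<dots>\<bar> \<le> (LINT x|lborel. \<bar>indicator E x *\<^sub>R f x - indicator B x *\<^sub>R f x\<bar>)"
    using integral_norm_bound[of lborel "\<lambda>x. indicator E x *\<^sub>R f x - indicator B x *\<^sub>R f x"] by simp
  also have "\<dots> \<le> (LINT x|lborel. M * (indicator (cball (0::complex^'n) r2) x - indicator (ball 0 r1) x))"
  proof (rule integral_mono)
    show "integrable lborel (\<lambda>x. \<bar>indicator E x *\<^sub>R f x - indicator B x *\<^sub>R f x\<bar>)"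
      using Bochner_Integration.integrable_diff[OF iE iB] by (rule integrable_abs)
    show "integrable lborel (\<lambda>x. M * (indicator (cball (0::complex^'n) r2) x - indicator (ball 0 r1) x))"
      by (rule iC)
    fix x :: "complex^'n"
    show "\<bar>indicator E x *\<^sub>R f x - indicator B x *\<^sub>R f x\<bar>
          \<le> M * (indicator (cball 0 r2) x - indicator (ball 0 r1) x)"
    proof (cases "x \<in> ball 0 r1")
      case True
      then have xE: "x \<in> E" "x \<in> B" using sub by auto
      then have "x \<in> cball 0 r2" using sub by auto
      note xE = xE this
      then show ?thesis using True xE by (simp add: indicator_def)
    next
      case False
      note F = False
      show ?thesis
      proof (cases "x \<in> cball 0 r2")
        case True
        then have xR: "x \<in> cball 0 R" using r by auto
        have M0: "0 \<le> M" using M[OF xR] by linarith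
        have "\<bar>indicator E x *\<^sub>R f x - indicator B x *\<^sub>R f x\<bar> \<le> \<bar>f x\<bar>"
          by (auto simp: indicator_def)
        also have "\<dots> \<le> M" using M[OF xR] .
        finally show ?thesis using True F by (simp add: indicator_def)
      next
        case False
        then have "x \<notin> E" "x \<notin> B" using sub by auto
        then show ?thesis using False F by (simp add: indicator_def)
      qed
    qed
  qed
  also have "\<dots> = M * (measure lborel (cball (0::complex^'n) r2) - measure lborel (ball (0::complex^'n) r1))"
    using fin1 fin2 by (simp add: Bochner_Integration.integral_diff integrable_real_indicator)
  finally show ?thesis .
qed

lemma NEG:
  fixes g :: "complex^'n \<Rightarrow> real"
  assumes g: "g \<in> borel_measurable borel"
  shows "(LINT z:ball 0 r|lborel. g (- z)) = (LINT z:ball 0 r|lborel. g z)"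
proof -
  have d: "distr lborel borel (\<lambda>x::complex^'n. - x) = lborel"
  proof -
    have "lborel = density (distr lborel borel (\<lambda>x::complex^'n. 0 + (-1) *\<^sub>R x)) (\<lambda>_. \<bar>-1::real\<bar> ^ DIM(complex^'n))"
      by (rule lborel_affine) simp
    then show ?thesis by (simp add: density_1)
  qed
  have [measurable]: "ball (0::complex^'n) r \<in> sets borel" by simp
  note g[measurable]
  have m: "(\<lambda>x. indicator (ball (0::complex^'n) r) x *\<^sub>R g x) \<in> borel_measurable borel"
    by measurable
  have "(LINT z:ball 0 r|lborel. g z) = (LINT x|distr lborel borel (\<lambda>x::complex^'n. - x). indicator (ball 0 r) x *\<^sub>R g x)"
    unfolding set_lebesgue_integral_def d ..
  also have "\<dots> = (LINT x|lborel. indicator (ball (0::complex^'n) r) (- x) *\<^sub>R g (- x))"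
    by (rule integral_distr) (auto intro: m)
  also have "\<dots> = (LINT z:ball 0 r|lborel. g (- z))"
    unfolding set_lebesgue_integral_def by (simp add: indicator_def)
  finally show ?thesis by simp
qed

lemma pow_diff_le:
  fixes x y :: real
  assumes "0 \<le> y" "y \<le> x" "x \<le> 1"
  shows "x ^ k - y ^ k \<le> real k * (x - y)"
proof (induction k)
  case 0 then show ?case by simp
next
  case (Suc k)
  have "x ^ Suc k - y ^ Suc k = x * (x^k - y^k) + (x - y) * y^k" by (simp add: algebra_simps)
  also have "\<dots> \<le> 1 * (x^k - y^k) + (x - y) * 1"
  proof (intro add_mono mult_mono)
    show "0 \<le> x ^ k - y ^ k" using assms by (simp add: power_mono)
    show "y ^ k \<le> 1" using assms by (simp add: power_le_one)
  qed (use assms in auto)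
  also have "\<dots> \<le> real (Suc k) * (x - y)" using Suc by (simp add: algebra_simps)
  finally show ?case .
qed

definition Gam :: "(complex^'n) set \<Rightarrow> complex^'n \<Rightarrow> real" where
  "Gam X a = (LINT z:X|lborel. ln (cmod (1 - cinner a z)) * bergman_dens z)"
definition mu :: "(complex^'n) set \<Rightarrow> real" where
  "mu X = (LINT z:X|lborel. bergman_dens z)"
definition Fb :: "(complex^'n) set \<Rightarrow> complex^'n \<Rightarrow> real" where
  "Fb X a = - mu X * ln (1 - (norm a)^2) + 2 * Gam X a"

lemma cinner_uminus_left: "cinner (- a) z = - cinner a z"
  unfolding cinner_def by (simp add: sum_negf)

lemma cinner_mid: "cinner ((a1 + a2) /\<^sub>R 2) z = (cinner a1 z + cinner a2 z) / 2"
proof -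
  have "cinner ((a1 + a2) /\<^sub>R 2) z = of_real (inverse 2) * cinner (a1 + a2) z" by (rule cinner_scaleR)
  also have "\<dots> = (cinner a1 z + cinner a2 z) / 2" unfolding cinner_add by (simp add: field_simps)
  finally show ?thesis .
qed

lemma cinner_le: "norm a \<le> A \<Longrightarrow> norm z \<le> R \<Longrightarrow> 0 \<le> R \<Longrightarrow> norm (cinner a z) \<le> A * R"
  by (rule order_trans[OF cinner_bound]) (intro mult_mono, auto intro: order_trans[OF norm_ge_zero])

lemma gcont:
  assumes a: "norm (a::complex^'n) < 1" and R: "R < 1"
  shows "continuous_on (cball 0 R) (\<lambda>z. ln (cmod (1 - cinner a z)) * bergman_dens z)"
proof -
  have "\<forall>z\<in>cball (0::complex^'n) R. cmod (1 - cinner a z) \<noteq> 0"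
  proof
    fix z :: "complex^'n" assume "z \<in> cball 0 R"
    then have z: "norm z < 1" using R by simp
    have "norm (cinner a z) \<le> norm a * norm z" by (rule cinner_bound)
    also have "\<dots> \<le> norm a" using z by (intro mult_left_le) auto
    also have "\<dots> < 1" using a .
    finally show "cmod (1 - cinner a z) \<noteq> 0" by auto
  qed
  then have c1: "continuous_on (cball (0::complex^'n) R) (\<lambda>z. ln (cmod (1 - cinner a z)))"
    by (intro continuous_on_ln continuous_on_norm continuous_on_diff continuous_on_const cinner_cont)
  show ?thesis by (rule continuous_on_mult[OF c1 bd_cont[OF R]])
qed

lemma gmeas: "(\<lambda>z. ln (cmod (1 - cinner a z)) * bergman_dens z) \<in> borel_measurable borel"
  using cinner_meas[of a] bd_meas by measurable

lemma Gam_int: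
  assumes "X \<in> sets lborel" "X \<subseteq> cball 0 R" "R < 1" "norm (a::complex^'n) < 1"
  shows "set_integrable lborel X (\<lambda>z. ln (cmod (1 - cinner a z)) * bergman_dens z)"
  using assms by (intro INT[of X R] gcont) auto

lemma mu_int:
  assumes "X \<in> sets lborel" "X \<subseteq> cball 0 R" "R < 1"
  shows "set_integrable lborel X (bergman_dens :: complex^'n \<Rightarrow> real)"
  using assms by (intro INT[of X R] bd_cont) auto

lemma defect_int:
  assumes X: "X \<in> sets lborel" "X \<subseteq> cball 0 R" "R < 1"
    and a: "norm (a1::complex^'n) < 1" "norm a2 < 1"
  shows "Gam X a1 + Gam X a2 - 2 * Gam X ((a1 + a2) /\<^sub>R 2) =
    (LINT z:X|lborel. (ln (cmod (1 - cinner a1 z)) + ln (cmod (1 - cinner a2 z))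
        - 2 * ln (cmod (1 - cinner ((a1 + a2) /\<^sub>R 2) z))) * bergman_dens z)"
proof -
  have m: "norm ((a1 + a2) /\<^sub>R 2) < 1"
    using a norm_triangle_ineq[of a1 a2] by simp
  note i1 = Gam_int[OF X a(1)] and i2 = Gam_int[OF X a(2)] and i3 = Gam_int[OF X m]
  have "(LINT z:X|lborel. (ln (cmod (1 - cinner a1 z)) + ln (cmod (1 - cinner a2 z))
        - 2 * ln (cmod (1 - cinner ((a1 + a2) /\<^sub>R 2) z))) * bergman_dens z)
     = (LINT z:X|lborel. (ln (cmod (1 - cinner a1 z)) * bergman_dens z + ln (cmod (1 - cinner a2 z)) * bergman_dens z)
        - 2 * (ln (cmod (1 - cinner ((a1 + a2) /\<^sub>R 2) z)) * bergman_dens z))"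
    by (simp add: left_diff_distrib distrib_right mult.assoc)
  also have "\<dots> = Gam X a1 + Gam X a2 - 2 * Gam X ((a1 + a2) /\<^sub>R 2)"
  proof -
    have i12: "set_integrable lborel X (\<lambda>z. ln (cmod (1 - cinner a1 z)) * bergman_dens z + ln (cmod (1 - cinner a2 z)) * bergman_dens z)"
      by (rule set_integral_add(1)[OF i1 i2])
    have i3': "set_integrable lborel X (\<lambda>z. 2 * (ln (cmod (1 - cinner ((a1 + a2) /\<^sub>R 2) z)) * bergman_dens z))"
      by (rule set_integrable_mult_right[OF i3])
    show ?thesis unfolding Gam_def
      by (simp only: set_integral_diff(2)[OF i12 i3'] set_integral_add(2)[OF i1 i2] set_integral_mult_right)
  qed
  finally show ?thesis by simp
qed

lemma bd_neg: "bergman_dens (- z) = bergman_dens z"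
  unfolding bergman_dens_def by simp

lemma Gam_neg_ball:
  "Gam (ball 0 r) (- a) = Gam (ball 0 r) (a::complex^'n)"
proof -
  have "Gam (ball 0 r) a = (LINT z:ball 0 r|lborel. (\<lambda>z. ln (cmod (1 - cinner a z)) * bergman_dens z) (- z))"
    unfolding Gam_def by (rule NEG[symmetric]) (rule gmeas)
  also have "\<dots> = Gam (ball 0 r) (- a)"
    unfolding Gam_def by (simp add: cinner_uminus_right cinner_uminus_left bd_neg)
  finally show ?thesis by simp
qed

lemma gcont0:
  assumes a: "norm (a::complex^'n) < 1" and R: "R < 1"
  shows "continuous_on (cball 0 R) (\<lambda>z. ln (cmod (1 - cinner a z)))"
proof -
  have "\<forall>z\<in>cball (0::complex^'n) R. cmod (1 - cinner a z) \<noteq> 0"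
  proof
    fix z :: "complex^'n" assume "z \<in> cball 0 R"
    then have z: "norm z < 1" using R by simp
    have "norm (cinner a z) \<le> norm a * norm z" by (rule cinner_bound)
    also have "\<dots> \<le> norm a" using z by (intro mult_left_le) auto
    also have "\<dots> < 1" using a .
    finally show "cmod (1 - cinner a z) \<noteq> 0" by auto
  qed
  then show ?thesis
    by (intro continuous_on_ln continuous_on_norm continuous_on_diff continuous_on_const cinner_cont)
qed

locale bsetup =
  fixes E :: "(complex^'n) set" and r r1 r2 R0 \<rho>m \<rho>p :: real
  assumes E_meas: "E \<in> sets lborel"
  and sub1: "ball 0 r1 \<subseteq> E" and sub2: "E \<subseteq> cball 0 r2"
  and rr: "0 \<le> r1" "r1 \<le> r" "r \<le> r2" "r2 \<le> R0" "R0 < 1"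
  and rho: "0 < \<rho>m" "\<rho>m \<le> r" "r \<le> \<rho>p" "\<rho>p < 1"
begin

definition "Wt = (1 - R0^2) powr (- (real CARD('n) + 1))"
definition "Dl = measure lborel (cball (0::complex^'n) r2) - measure lborel (ball (0::complex^'n) r1)"
definition "DD = Wt * Dl"
definition "m0 = unit_ball_vol (DIM(complex^'n)) * \<rho>m ^ DIM(complex^'n) * (1 - \<rho>p^2)"
definition "eta = (1 - \<rho>p^2) / 4"
definition "C1 = 4 * R0 / ((1 - R0) * m0)"

lemma R0_pos: "0 < R0" using rr rho by linarith

lemma B_meas: "ball (0::complex^'n) r \<in> sets lborel" by simp

lemma E_R0: "E \<subseteq> cball 0 R0" using sub2 rr by auto
lemma B_R0: "ball (0::complex^'n) r \<subseteq> cball 0 R0" using rr by auto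

lemma w_le: "z \<in> cball (0::complex^'n) R0 \<Longrightarrow> bergman_dens z \<le> Wt"
  unfolding Wt_def using rr by (intro bd_le) auto

lemma w_pos: "z \<in> cball (0::complex^'n) R0 \<Longrightarrow> 0 < bergman_dens z"
  using rr by (intro bd_pos) auto

lemma Wt_pos: "0 < Wt"
  using w_le[of 0] w_pos[of 0] R0_pos by simp

lemma Dl_nonneg: "0 \<le> Dl"
proof -
  have "unit_ball_vol (DIM(complex^'n)) * r1 ^ DIM(complex^'n) \<le> unit_ball_vol (DIM(complex^'n)) * r2 ^ DIM(complex^'n)"
    using rr by (intro mult_left_mono power_mono) auto
  then show ?thesis unfolding Dl_def using rr
    by (simp add: content_ball0 content_cball0)
qed

lemma DD_nonneg: "0 \<le> DD" unfolding DD_def using Wt_pos Dl_nonneg by simp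

lemma compEB:
  fixes f :: "complex^'n \<Rightarrow> real"
  assumes "continuous_on (cball 0 R0) f" "\<And>z. z \<in> cball 0 R0 \<Longrightarrow> \<bar>f z\<bar> \<le> H * Wt"
  shows "\<bar>(LINT z:E|lborel. f z) - (LINT z:ball 0 r|lborel. f z)\<bar> \<le> H * DD"
proof -
  have "\<bar>(LINT z:E|lborel. f z) - (LINT z:ball 0 r|lborel. f z)\<bar> \<le> (H * Wt) * Dl"
    unfolding Dl_def
    by (rule COMP[OF E_meas B_meas sub1 _ sub2 _ rr(4) assms]) (use rr in auto)
  then show ?thesis unfolding DD_def by (simp add: mult.assoc)
qed

lemma mu_cmp: "\<bar>mu E - mu (ball (0::complex^'n) r)\<bar> \<le> DD"
proof -
  have "\<bar>mu E - mu (ball (0::complex^'n) r)\<bar> \<le> 1 * DD" unfolding mu_def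
  proof (rule compEB)
    show "continuous_on (cball 0 R0) (bergman_dens :: complex^'n \<Rightarrow> real)" using rr by (intro bd_cont) auto
    fix z :: "complex^'n" assume z: "z \<in> cball 0 R0"
    show "\<bar>bergman_dens z\<bar> \<le> 1 * Wt" using w_le[OF z] w_pos[OF z] by simp
  qed
  then show ?thesis by simp
qed

lemma mu_B_ge: "unit_ball_vol (DIM(complex^'n)) * \<rho>m ^ DIM(complex^'n) \<le> mu (ball (0::complex^'n) r)"
proof -
  have fin: "emeasure lborel (ball (0::complex^'n) r) \<noteq> \<infinity>"
    using emeasure_lborel_ball_finite[of "0::complex^'n" r] by simp
  have "unit_ball_vol (DIM(complex^'n)) * \<rho>m ^ DIM(complex^'n) \<le> unit_ball_vol (DIM(complex^'n)) * r ^ DIM(complex^'n)"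
    using rho by (intro mult_left_mono power_mono) auto
  also have "\<dots> = measure lborel (ball (0::complex^'n) r)" using rho by (simp add: content_ball0)
  also have "\<dots> = (LINT z:ball (0::complex^'n) r|lborel. (1::real))" by (subst set_integral_const[OF B_meas fin]) simp
  also have "\<dots> \<le> mu (ball (0::complex^'n) r)" unfolding mu_def
  proof (rule set_integral_mono)
    show "set_integrable lborel (ball (0::complex^'n) r) (\<lambda>z. 1::real)"
      using INT[OF B_meas B_R0, of "\<lambda>_. 1"] by simp
    show "set_integrable lborel (ball (0::complex^'n) r) bergman_dens"
      using rr by (intro mu_int[OF B_meas B_R0]) 
    fix z :: "complex^'n" assume "z \<in> ball 0 r"
    then show "1 \<le> bergman_dens z" using rho by (intro bd_ge1) auto
  qed
  finally show ?thesis .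
qed

lemma m0_pos: "0 < m0"
proof -
  have "0 < 1 - \<rho>p^2" using rho power_strict_mono[of \<rho>p 1 2] by simp
  then show ?thesis unfolding m0_def using rho by simp
qed

lemma muB_m0: "m0 \<le> mu (ball (0::complex^'n) r) * (1 - \<rho>p^2)"
proof -
  have "0 < 1 - \<rho>p^2" using rho power_strict_mono[of \<rho>p 1 2] by simp
  then show ?thesis unfolding m0_def using mu_B_ge by (intro mult_right_mono) auto
qed

end

lemma Gam_zero: "Gam X 0 = 0" unfolding Gam_def by simp
lemma Fb_zero: "Fb X 0 = 0" unfolding Fb_def by (simp add: Gam_zero)

context bsetup begin

lemma eta_le: "eta \<le> 1/4" "0 < eta"
proof -
  have "0 < 1 - \<rho>p^2" using rho power_strict_mono[of \<rho>p 1 2] by simp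
  then show "0 < eta" unfolding eta_def by simp
  show "eta \<le> 1/4" unfolding eta_def by simp
qed

lemma PB:
  assumes a: "norm (a::complex^'n) < 1"
  shows "\<bar>Gam E a - Gam (ball (0::complex^'n) r) a\<bar> \<le> (norm a * R0 / (1 - R0)) * DD"
  unfolding Gam_def
proof (rule compEB)
  show "continuous_on (cball 0 R0) (\<lambda>z. ln (cmod (1 - cinner a z)) * bergman_dens z)"
    using a rr by (intro gcont) auto
  fix z :: "complex^'n" assume z: "z \<in> cball 0 R0"
  have v: "norm (cinner a z) \<le> norm a * R0" using z R0_pos by (intro cinner_le) auto
  have aR: "norm a * R0 \<le> R0" using a R0_pos by (intro mult_left_le_one_le) auto
  have v1: "norm (cinner a z) < 1" using v aR rr by linarith
  have "\<bar>ln (cmod (1 - cinner a z))\<bar> \<le> norm (cinner a z) / (1 - norm (cinner a z))"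
    using v1 by (rule G_abs_bound)
  also have "\<dots> \<le> (norm a * R0) / (1 - R0)"
    using v aR rr by (intro frac_le) auto
  finally have g: "\<bar>ln (cmod (1 - cinner a z))\<bar> \<le> norm a * R0 / (1 - R0)" .
  have "\<bar>ln (cmod (1 - cinner a z)) * bergman_dens z\<bar> = \<bar>ln (cmod (1 - cinner a z))\<bar> * bergman_dens z"
    using w_pos[OF z] by (simp add: abs_mult)
  also have "\<dots> \<le> (norm a * R0 / (1 - R0)) * Wt"
    using g w_le[OF z] w_pos[OF z] by (intro mult_mono) auto
  finally show "\<bar>ln (cmod (1 - cinner a z)) * bergman_dens z\<bar> \<le> (norm a * R0 / (1 - R0)) * Wt" .
qed

lemma LBB:
  assumes a: "norm (a::complex^'n) < 1"
  shows "r^2 * ln (1 - (norm a)^2) * mu (ball (0::complex^'n) r)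
         \<le> Gam (ball (0::complex^'n) r) a + Gam (ball (0::complex^'n) r) (- a)"
proof -
  have a': "norm (- a) < 1" using a by simp
  note i1 = Gam_int[OF B_meas B_R0 rr(5) a] and i2 = Gam_int[OF B_meas B_R0 rr(5) a']
  have e1: "Gam (ball (0::complex^'n) r) a + Gam (ball 0 r) (- a) =
     (LINT z:ball 0 r|lborel. ln (cmod (1 - cinner a z)) * bergman_dens z + ln (cmod (1 - cinner (- a) z)) * bergman_dens z)"
    unfolding Gam_def by (rule set_integral_add(2)[OF i1 i2, symmetric])
  have e2: "(LINT z:ball (0::complex^'n) r|lborel. (r^2 * ln (1 - (norm a)^2)) * bergman_dens z)
     \<le> (LINT z:ball 0 r|lborel. ln (cmod (1 - cinner a z)) * bergman_dens z + ln (cmod (1 - cinner (- a) z)) * bergman_dens z)"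
  proof (rule set_integral_mono)
    show "set_integrable lborel (ball (0::complex^'n) r) (\<lambda>z. r\<^sup>2 * ln (1 - (norm a)\<^sup>2) * bergman_dens z)"
      by (intro set_integrable_mult_right mu_int[OF B_meas B_R0 rr(5)])
    show "set_integrable lborel (ball (0::complex^'n) r)
        (\<lambda>z. ln (cmod (1 - cinner a z)) * bergman_dens z + ln (cmod (1 - cinner (- a) z)) * bergman_dens z)"
      by (rule set_integral_add(1)[OF i1 i2])
    fix z :: "complex^'n" assume z: "z \<in> ball 0 r"
    define v where "v = cinner a z"
    have zR: "z \<in> cball 0 R0" using z B_R0 by auto
    have nz: "norm z \<le> r" using z by simp
    have r0: "0 \<le> r" using rr by linarith
    have nv: "norm v \<le> norm a * r" unfolding v_def using nz r0 by (intro cinner_le) auto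
    have ar: "norm a * r < 1"
    proof -
      have "norm a * r \<le> norm a" using r0 rr rho by (intro mult_left_le) auto
      then show ?thesis using a by linarith
    qed
    have nv1: "norm v < 1" using nv ar by linarith
    have s0: "0 \<le> (norm a)^2" "(norm a)^2 < 1" using a nsq[of a] by auto
    have t0: "0 \<le> r^2" "r^2 \<le> 1" using r0 rr power_le_one[of r 2] by auto
    have "(norm v)^2 \<le> (norm a * r)^2" using nv by (intro power_mono) auto
    then have q1: "1 - r^2 * (norm a)^2 \<le> 1 - (norm v)^2" by (simp add: power_mult_distrib algebra_simps)
    have q0: "0 < 1 - r^2 * (norm a)^2"
    proof -
      have "r^2 * (norm a)^2 \<le> 1 * (norm a)^2" using t0 s0 by (intro mult_right_mono) auto
      then show ?thesis using s0 by linarith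
    qed
    have "1 - (norm v)^2 \<le> cmod (1 - v^2)"
      using norm_triangle_ineq2[of 1 "v^2"] by (simp add: norm_power)
    have c1: "(1 - v) * (1 + v) = 1 - v^2" by (simp add: power2_eq_square algebra_simps)
    have ne1: "1 - v \<noteq> 0" "1 + v \<noteq> 0" using nv1 by (auto simp: add_eq_0_iff)
    have p: "0 < cmod (1 - v)" "0 < cmod (1 + v)" using ne1 by auto
    have "ln (cmod (1 - v)) + ln (cmod (1 + v)) = ln (cmod (1 - v) * cmod (1 + v))"
      using p by (simp add: ln_mult)
    also have "\<dots> = ln (cmod (1 - v^2))" by (simp only: norm_mult[symmetric] c1)
    finally have "ln (cmod (1 - v)) + ln (cmod (1 + v)) = ln (cmod (1 - v^2))" .
    moreover have "ln (1 - r^2 * (norm a)^2) \<le> ln (cmod (1 - v^2))"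
      using q0 q1 \<open>1 - (norm v)^2 \<le> cmod (1 - v^2)\<close> by (intro ln_mono) auto
    moreover have "r^2 * ln (1 - (norm a)^2) \<le> ln (1 - r^2 * (norm a)^2)"
      using s0 t0 by (intro ln_concave_aux) auto
    ultimately have g: "r^2 * ln (1 - (norm a)^2) \<le> ln (cmod (1 - v)) + ln (cmod (1 + v))" by linarith
    have "r^2 * ln (1 - (norm a)^2) * bergman_dens z \<le> (ln (cmod (1 - v)) + ln (cmod (1 + v))) * bergman_dens z"
      using g w_pos[OF zR] by (intro mult_right_mono) auto
    then show "r^2 * ln (1 - (norm a)^2) * bergman_dens z
       \<le> ln (cmod (1 - cinner a z)) * bergman_dens z + ln (cmod (1 - cinner (- a) z)) * bergman_dens z"
      unfolding v_def cinner_uminus_left by (simp add: distrib_right)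
  qed
  have e3: "(LINT z:ball (0::complex^'n) r|lborel. (r^2 * ln (1 - (norm a)^2)) * bergman_dens z)
      = r^2 * ln (1 - (norm a)^2) * mu (ball (0::complex^'n) r)"
    unfolding mu_def by simp
  show ?thesis using e1 e2 e3 by linarith
qed

end

context bsetup begin

lemma DBB:
  assumes a1: "norm (a1::complex^'n) \<le> eta" and a2: "norm a2 \<le> eta"
  shows "- (mu (ball (0::complex^'n) r) * (r^2 * (norm (a1 - a2))^2 / (4 * (1 - 2 * eta))))
     \<le> Gam (ball (0::complex^'n) r) a1 + Gam (ball 0 r) a2 - 2 * Gam (ball 0 r) ((a1 + a2) /\<^sub>R 2)"
proof -
  have e1: "norm a1 < 1" "norm a2 < 1" using a1 a2 eta_le by auto
  have m: "norm ((a1 + a2) /\<^sub>R 2) < 1" using e1 norm_triangle_ineq[of a1 a2] by simp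
  define c where "c = - (r^2 * (norm (a1 - a2))^2 / (4 * (1 - 2 * eta)))"
  have "(LINT z:ball (0::complex^'n) r|lborel. c * bergman_dens z) \<le>
    (LINT z:ball 0 r|lborel. (ln (cmod (1 - cinner a1 z)) + ln (cmod (1 - cinner a2 z))
        - 2 * ln (cmod (1 - cinner ((a1 + a2) /\<^sub>R 2) z))) * bergman_dens z)"
  proof (rule set_integral_mono)
    show "set_integrable lborel (ball (0::complex^'n) r) (\<lambda>z. c * bergman_dens z)"
      by (intro set_integrable_mult_right mu_int[OF B_meas B_R0 rr(5)])
    have i1: "set_integrable lborel (ball (0::complex^'n) r) (\<lambda>z. ln (cmod (1 - cinner a1 z)) * bergman_dens z)"
      by (rule Gam_int[OF B_meas B_R0 rr(5) e1(1)])
    have i2: "set_integrable lborel (ball (0::complex^'n) r) (\<lambda>z. ln (cmod (1 - cinner a2 z)) * bergman_dens z)"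
      by (rule Gam_int[OF B_meas B_R0 rr(5) e1(2)])
    have i3: "set_integrable lborel (ball (0::complex^'n) r) (\<lambda>z. 2 * (ln (cmod (1 - cinner ((a1 + a2) /\<^sub>R 2) z)) * bergman_dens z))"
      by (intro set_integrable_mult_right Gam_int[OF B_meas B_R0 rr(5) m])
    have "set_integrable lborel (ball (0::complex^'n) r) (\<lambda>z. ln (cmod (1 - cinner a1 z)) * bergman_dens z + ln (cmod (1 - cinner a2 z)) * bergman_dens z
       - 2 * (ln (cmod (1 - cinner ((a1 + a2) /\<^sub>R 2) z)) * bergman_dens z))"
      by (intro set_integral_diff(1) set_integral_add(1) i1 i2 i3)
    then show "set_integrable lborel (ball (0::complex^'n) r) (\<lambda>z. (ln (cmod (1 - cinner a1 z)) + ln (cmod (1 - cinner a2 z))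
        - 2 * ln (cmod (1 - cinner ((a1 + a2) /\<^sub>R 2) z))) * bergman_dens z)"
      by (simp add: left_diff_distrib distrib_right mult.assoc)
    fix z :: "complex^'n" assume z: "z \<in> ball 0 r"
    have zR: "z \<in> cball 0 R0" using z B_R0 by auto
    have nz: "norm z \<le> 1" using z rr by simp
    have nz': "norm z \<le> r" using z by simp
    have r0: "0 \<le> r" using rr by linarith
    have v1: "norm (cinner a1 z) \<le> eta" using a1 nz eta_le
      by (metis cinner_bound mult_left_le norm_ge_zero order_trans)
    have v2: "norm (cinner a2 z) \<le> eta" using a2 nz eta_le
      by (metis cinner_bound mult_left_le norm_ge_zero order_trans)
    have D: "- ((norm (cinner a1 z - cinner a2 z))^2 / (4 * (1 - 2 * eta)))
       \<le> ln (cmod (1 - cinner a1 z)) + ln (cmod (1 - cinner a2 z)) - 2 * ln (cmod (1 - (cinner a1 z + cinner a2 z)/2))"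
      using v1 v2 eta_le by (intro G_defect_bounds(2)) auto
    have dv: "norm (cinner a1 z - cinner a2 z) \<le> norm (a1 - a2) * r"
      unfolding cinner_diff[symmetric] using nz' r0 by (intro cinner_le) auto
    have "(norm (cinner a1 z - cinner a2 z))^2 \<le> (norm (a1 - a2) * r)^2"
      using dv by (intro power_mono) auto
    moreover have "0 < 4 * (1 - 2 * eta)" using eta_le by simp
    ultimately have "(norm (cinner a1 z - cinner a2 z))^2 / (4 * (1 - 2 * eta)) \<le> r^2 * (norm (a1 - a2))^2 / (4 * (1 - 2 * eta))"
      by (simp add: divide_right_mono power_mult_distrib mult.commute)
    with D have g: "c \<le> ln (cmod (1 - cinner a1 z)) + ln (cmod (1 - cinner a2 z)) - 2 * ln (cmod (1 - cinner ((a1 + a2) /\<^sub>R 2) z))"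
      unfolding c_def cinner_mid by linarith
    show "c * bergman_dens z \<le> (ln (cmod (1 - cinner a1 z)) + ln (cmod (1 - cinner a2 z))
        - 2 * ln (cmod (1 - cinner ((a1 + a2) /\<^sub>R 2) z))) * bergman_dens z"
      using g w_pos[OF zR] by (intro mult_right_mono) auto
  qed
  moreover have "(LINT z:ball (0::complex^'n) r|lborel. c * bergman_dens z) = c * mu (ball (0::complex^'n) r)"
    unfolding mu_def by simp
  moreover have "Gam (ball (0::complex^'n) r) a1 + Gam (ball 0 r) a2 - 2 * Gam (ball 0 r) ((a1 + a2) /\<^sub>R 2) =
    (LINT z:ball 0 r|lborel. (ln (cmod (1 - cinner a1 z)) + ln (cmod (1 - cinner a2 z))
        - 2 * ln (cmod (1 - cinner ((a1 + a2) /\<^sub>R 2) z))) * bergman_dens z)"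
    by (rule defect_int[OF B_meas B_R0 rr(5) e1])
  ultimately have "c * mu (ball (0::complex^'n) r) \<le> Gam (ball (0::complex^'n) r) a1 + Gam (ball 0 r) a2 - 2 * Gam (ball 0 r) ((a1 + a2) /\<^sub>R 2)"
    by linarith
  then show ?thesis unfolding c_def by (simp add: mult.commute)
qed

end

context bsetup begin

lemma DEB:
  assumes a1: "norm (a1::complex^'n) \<le> 1/4" and a2: "norm a2 \<le> 1/4"
  shows "\<bar>(Gam E a1 + Gam E a2 - 2 * Gam E ((a1 + a2) /\<^sub>R 2))
        - (Gam (ball (0::complex^'n) r) a1 + Gam (ball 0 r) a2 - 2 * Gam (ball 0 r) ((a1 + a2) /\<^sub>R 2))\<bar>
      \<le> (norm (a1 - a2))^2 * DD"
proof -
  have e1: "norm a1 < 1" "norm a2 < 1" using a1 a2 by auto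
  have m: "norm ((a1 + a2) /\<^sub>R 2) < 1" using e1 norm_triangle_ineq[of a1 a2] by simp
  have dE: "Gam E a1 + Gam E a2 - 2 * Gam E ((a1 + a2) /\<^sub>R 2) =
    (LINT z:E|lborel. (ln (cmod (1 - cinner a1 z)) + ln (cmod (1 - cinner a2 z))
        - 2 * ln (cmod (1 - cinner ((a1 + a2) /\<^sub>R 2) z))) * bergman_dens z)"
    by (rule defect_int[OF E_meas E_R0 rr(5) e1])
  have dB: "Gam (ball (0::complex^'n) r) a1 + Gam (ball 0 r) a2 - 2 * Gam (ball 0 r) ((a1 + a2) /\<^sub>R 2) =
    (LINT z:ball 0 r|lborel. (ln (cmod (1 - cinner a1 z)) + ln (cmod (1 - cinner a2 z))
        - 2 * ln (cmod (1 - cinner ((a1 + a2) /\<^sub>R 2) z))) * bergman_dens z)"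
    by (rule defect_int[OF B_meas B_R0 rr(5) e1])
  have "\<bar>(LINT z:E|lborel. (ln (cmod (1 - cinner a1 z)) + ln (cmod (1 - cinner a2 z))
        - 2 * ln (cmod (1 - cinner ((a1 + a2) /\<^sub>R 2) z))) * bergman_dens z) -
      (LINT z:ball 0 r|lborel. (ln (cmod (1 - cinner a1 z)) + ln (cmod (1 - cinner a2 z))
        - 2 * ln (cmod (1 - cinner ((a1 + a2) /\<^sub>R 2) z))) * bergman_dens z)\<bar> \<le> (norm (a1 - a2))^2 * DD"
  proof (rule compEB)
    have R: "R0 < 1" using rr by simp
    show "continuous_on (cball 0 R0) (\<lambda>z. (ln (cmod (1 - cinner a1 z)) + ln (cmod (1 - cinner a2 z))
        - 2 * ln (cmod (1 - cinner ((a1 + a2) /\<^sub>R 2) z))) * bergman_dens z)"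
      by (intro continuous_on_mult continuous_on_diff continuous_on_add continuous_on_const
          gcont0[OF e1(1) R] gcont0[OF e1(2) R] gcont0[OF m R] bd_cont[OF R])
    fix z :: "complex^'n" assume z: "z \<in> cball 0 R0"
    have nz: "norm z \<le> 1" using z rr by simp
    have v1: "norm (cinner a1 z) \<le> 1/4" using a1 nz
      by (metis cinner_bound mult_left_le norm_ge_zero order_trans)
    have v2: "norm (cinner a2 z) \<le> 1/4" using a2 nz
      by (metis cinner_bound mult_left_le norm_ge_zero order_trans)
    have D: "\<bar>ln (cmod (1 - cinner a1 z)) + ln (cmod (1 - cinner a2 z)) - 2 * ln (cmod (1 - (cinner a1 z + cinner a2 z)/2))\<bar>
       \<le> (norm (cinner a1 z - cinner a2 z))^2"
      by (rule G_defect_bounds(1)[OF v1 v2 order_refl])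
    have dv: "norm (cinner a1 z - cinner a2 z) \<le> norm (a1 - a2) * 1"
      unfolding cinner_diff[symmetric] using nz by (intro cinner_le) auto
    have "(norm (cinner a1 z - cinner a2 z))^2 \<le> (norm (a1 - a2))^2"
      using dv by (intro power_mono) auto
    with D have g: "\<bar>ln (cmod (1 - cinner a1 z)) + ln (cmod (1 - cinner a2 z)) - 2 * ln (cmod (1 - cinner ((a1 + a2) /\<^sub>R 2) z))\<bar>
        \<le> (norm (a1 - a2))^2"
      unfolding cinner_mid by linarith
    have "\<bar>(ln (cmod (1 - cinner a1 z)) + ln (cmod (1 - cinner a2 z))
        - 2 * ln (cmod (1 - cinner ((a1 + a2) /\<^sub>R 2) z))) * bergman_dens z\<bar>
      = \<bar>ln (cmod (1 - cinner a1 z)) + ln (cmod (1 - cinner a2 z))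
        - 2 * ln (cmod (1 - cinner ((a1 + a2) /\<^sub>R 2) z))\<bar> * bergman_dens z"
      using w_pos[OF z] by (simp add: abs_mult)
    also have "\<dots> \<le> (norm (a1 - a2))^2 * Wt"
      using g w_le[OF z] w_pos[OF z] by (intro mult_mono) auto
    finally show "\<bar>(ln (cmod (1 - cinner a1 z)) + ln (cmod (1 - cinner a2 z))
        - 2 * ln (cmod (1 - cinner ((a1 + a2) /\<^sub>R 2) z))) * bergman_dens z\<bar> \<le> (norm (a1 - a2))^2 * Wt" .
  qed
  then show ?thesis unfolding dE dB .
qed

lemma LIP:
  assumes a: "norm (a::complex^'n) \<le> 1/2" and b: "norm b \<le> 1/2"
  shows "\<bar>Gam E a - Gam E b\<bar> \<le> 2 * norm (a - b) * mu E"
proof -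
  have e: "norm a < 1" "norm b < 1" using a b by auto
  note ia = Gam_int[OF E_meas E_R0 rr(5) e(1)] and ib = Gam_int[OF E_meas E_R0 rr(5) e(2)]
  have "Gam E a - Gam E b = (LINT z:E|lborel. ln (cmod (1 - cinner a z)) * bergman_dens z - ln (cmod (1 - cinner b z)) * bergman_dens z)"
    unfolding Gam_def by (rule set_integral_diff(2)[OF ia ib, symmetric])
  also have "\<bar>\<dots>\<bar> \<le> (LINT z:E|lborel. 2 * norm (a - b) * bergman_dens z)"
  proof (rule ABS)
    show "set_integrable lborel E (\<lambda>z. ln (cmod (1 - cinner a z)) * bergman_dens z - ln (cmod (1 - cinner b z)) * bergman_dens z)"
      by (rule set_integral_diff(1)[OF ia ib])
    show "set_integrable lborel E (\<lambda>z. 2 * norm (a - b) * bergman_dens z)"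
      by (intro set_integrable_mult_right mu_int[OF E_meas E_R0 rr(5)])
    fix z :: "complex^'n" assume z: "z \<in> E"
    have zR: "z \<in> cball 0 R0" using z E_R0 by auto
    have nz: "norm z \<le> 1" using zR rr by simp
    have va: "norm (cinner a z) \<le> 1/2" using a nz
      by (metis cinner_bound mult_left_le norm_ge_zero order_trans)
    have vb: "norm (cinner b z) \<le> 1/2" using b nz
      by (metis cinner_bound mult_left_le norm_ge_zero order_trans)
    have L: "\<bar>ln (cmod (1 - cinner a z)) - ln (cmod (1 - cinner b z))\<bar> \<le> 2 * norm (cinner a z - cinner b z)"
      using va vb by (rule G_lipschitz)
    have dv: "norm (cinner a z - cinner b z) \<le> norm (a - b) * 1"
      unfolding cinner_diff[symmetric] using nz by (intro cinner_le) auto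
    have g: "\<bar>ln (cmod (1 - cinner a z)) - ln (cmod (1 - cinner b z))\<bar> \<le> 2 * norm (a - b)"
      using L dv by linarith
    have "\<bar>ln (cmod (1 - cinner a z)) * bergman_dens z - ln (cmod (1 - cinner b z)) * bergman_dens z\<bar>
       = \<bar>ln (cmod (1 - cinner a z)) - ln (cmod (1 - cinner b z))\<bar> * bergman_dens z"
      using w_pos[OF zR] by (simp add: abs_mult left_diff_distrib[symmetric])
    also have "\<dots> \<le> 2 * norm (a - b) * bergman_dens z"
      using g w_pos[OF zR] by (intro mult_right_mono) auto
    finally show "\<bar>ln (cmod (1 - cinner a z)) * bergman_dens z - ln (cmod (1 - cinner b z)) * bergman_dens z\<bar>
        \<le> 2 * norm (a - b) * bergman_dens z" .
  qed
  also have "\<dots> = 2 * norm (a - b) * mu E" unfolding mu_def by simp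
  finally show ?thesis .
qed

definition "K0 = - (LINT z:E|lborel. ln (1 - (norm z)^2) * bergman_dens z)"

lemma LEQ:
  assumes a: "norm (a::complex^'n) < 1"
  shows "L_fun E a = Fb E a + K0"
proof -
  have R: "R0 < 1" using rr by simp
  have ia: "set_integrable lborel E (\<lambda>z. ln (1 - (norm a)^2) * bergman_dens z)"
    by (intro set_integrable_mult_right mu_int[OF E_meas E_R0 R])
  have cz: "continuous_on (cball 0 R0) (\<lambda>z::complex^'n. ln (1 - (norm z)^2) * bergman_dens z)"
  proof (intro continuous_on_mult bd_cont[OF R] continuous_on_ln continuous_on_diff continuous_on_const
      continuous_on_power continuous_on_norm continuous_on_id ballI)
    fix z :: "complex^'n" assume "z \<in> cball 0 R0"
    then have "norm z < 1" using R by simp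
    then show "1 - (norm z)^2 \<noteq> 0" using nsq[of z] by simp
  qed
  have iz: "set_integrable lborel E (\<lambda>z::complex^'n. ln (1 - (norm z)^2) * bergman_dens z)"
    by (rule INT[OF E_meas E_R0 cz])
  have ig: "set_integrable lborel E (\<lambda>z. 2 * (ln (cmod (1 - cinner a z)) * bergman_dens z))"
    by (intro set_integrable_mult_right Gam_int[OF E_meas E_R0 R a])
  have pw: "\<forall>z. z \<in> E \<longrightarrow> ln ((1 - (norm a)^2) * (1 - (norm z)^2) / (cmod (1 - cinner a z))^2) * bergman_dens z
      = ln (1 - (norm a)^2) * bergman_dens z + ln (1 - (norm z)^2) * bergman_dens z
         - 2 * (ln (cmod (1 - cinner a z)) * bergman_dens z)"
  proof (intro allI impI)
    fix z :: "complex^'n" assume z: "z \<in> E"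
    have nz: "norm z < 1" using z E_R0 R by auto
    have p1: "0 < 1 - (norm a)^2" using nsq[OF a] by simp
    have p2: "0 < 1 - (norm z)^2" using nsq[OF nz] by simp
    have "norm (cinner a z) \<le> norm a * norm z" by (rule cinner_bound)
    also have "\<dots> \<le> norm a" using nz by (intro mult_left_le) auto
    finally have "norm (cinner a z) < 1" using a by linarith
    then have p3: "0 < cmod (1 - cinner a z)" by auto
    have "ln ((1 - (norm a)^2) * (1 - (norm z)^2) / (cmod (1 - cinner a z))^2)
        = ln ((1 - (norm a)^2) * (1 - (norm z)^2)) - ln ((cmod (1 - cinner a z))^2)"
      using p1 p2 p3 by (intro ln_divide_pos) auto
    also have "\<dots> = ln (1 - (norm a)^2) + ln (1 - (norm z)^2) - 2 * ln (cmod (1 - cinner a z))"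
      using p1 p2 p3 by (simp add: ln_mult ln_realpow)
    finally have "ln ((1 - (norm a)^2) * (1 - (norm z)^2) / (cmod (1 - cinner a z))^2)
        = ln (1 - (norm a)^2) + ln (1 - (norm z)^2) - 2 * ln (cmod (1 - cinner a z))" .
    then show "ln ((1 - (norm a)^2) * (1 - (norm z)^2) / (cmod (1 - cinner a z))^2) * bergman_dens z
      = ln (1 - (norm a)^2) * bergman_dens z + ln (1 - (norm z)^2) * bergman_dens z
         - 2 * (ln (cmod (1 - cinner a z)) * bergman_dens z)"
      by (simp only: distrib_right left_diff_distrib mult.assoc)
  qed
  have "L_fun E a = - (LINT z:E|lborel. ln (1 - (norm a)^2) * bergman_dens z + ln (1 - (norm z)^2) * bergman_dens z
         - 2 * (ln (cmod (1 - cinner a z)) * bergman_dens z))"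
    unfolding L_fun_def by (simp only: set_lebesgue_integral_cong[OF E_meas pw])
  also have "\<dots> = - ((LINT z:E|lborel. ln (1 - (norm a)^2) * bergman_dens z) + (LINT z:E|lborel. ln (1 - (norm z)^2) * bergman_dens z)
         - (LINT z:E|lborel. 2 * (ln (cmod (1 - cinner a z)) * bergman_dens z)))"
    by (simp only: set_integral_diff(2)[OF set_integral_add(1)[OF ia iz] ig] set_integral_add(2)[OF ia iz])
  also have "\<dots> = Fb E a + K0"
    unfolding Fb_def K0_def mu_def Gam_def by simp
  finally show ?thesis .
qed

end

context bsetup begin

lemma hA_ge: "norm (a::complex^'n) < 1 \<Longrightarrow> (norm a)^2 \<le> - ln (1 - (norm a)^2)"
proof -
  assume a: "norm a < 1"
  have "0 < 1 - (norm a)^2" using nsq[OF a] by simp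
  then have "ln (1 - (norm a)^2) \<le> (1 - (norm a)^2) - 1" by (rule ln_le_minus_one)
  then show ?thesis by simp
qed

lemma muB_pos: "0 < mu (ball (0::complex^'n) r)"
proof -
  have "0 < 1 - \<rho>p^2" using rho power_strict_mono[of \<rho>p 1 2] by simp
  show ?thesis
  proof (rule ccontr)
    assume "\<not> 0 < mu (ball (0::complex^'n) r)"
    then have "mu (ball (0::complex^'n) r) * (1 - \<rho>p^2) \<le> 0"
      using \<open>0 < 1 - \<rho>p^2\<close> by (intro mult_nonpos_nonneg) auto
    then show False using muB_m0 m0_pos by linarith
  qed
qed

lemma C1_nonneg: "0 \<le> C1"
  unfolding C1_def using R0_pos rr m0_pos by simp

lemma LB:
  assumes a: "norm (a::complex^'n) < 1" and small1: "DD \<le> m0 / 20"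
  shows "(m0/2) * (norm a)^2 - (2 * R0 / (1 - R0)) * DD * norm a \<le> Fb E a"
proof -
  define hA where "hA = - ln (1 - (norm a)^2)"
  define muB where "muB = mu (ball (0::complex^'n) r)"
  have hA: "(norm a)^2 \<le> hA" unfolding hA_def using a by (rule hA_ge)
  have hA0: "0 \<le> hA" using hA by (smt (verit) zero_le_power2)
  have F: "Fb E a = mu E * hA + 2 * Gam E a" unfolding Fb_def hA_def by simp
  have t1: "(muB - DD) * hA \<le> mu E * hA"
    using mu_cmp hA0 unfolding muB_def by (intro mult_right_mono) auto
  have gn: "Gam (ball (0::complex^'n) r) (- a) = Gam (ball 0 r) a" by (rule Gam_neg_ball)
  have lbb: "r^2 * ln (1 - (norm a)^2) * muB \<le> Gam (ball (0::complex^'n) r) a + Gam (ball 0 r) (- a)"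
    unfolding muB_def by (rule LBB[OF a])
  have pb: "\<bar>Gam E a - Gam (ball (0::complex^'n) r) a\<bar> \<le> (norm a * R0 / (1 - R0)) * DD" by (rule PB[OF a])
  have t2: "- (r^2 * hA * muB) - 2 * ((norm a * R0 / (1 - R0)) * DD) \<le> 2 * Gam E a"
    using lbb pb gn unfolding hA_def by (simp add: abs_le_iff)
  have k: "m0 / 2 \<le> muB - DD - r^2 * muB"
  proof -
    have "r^2 \<le> \<rho>p^2" using rho rr by (intro power_mono) auto
    then have "muB * (1 - \<rho>p^2) \<le> muB * (1 - r^2)" using muB_pos unfolding muB_def by (intro mult_left_mono) auto
    then have "m0 \<le> muB * (1 - r^2)" using muB_m0 unfolding muB_def by linarith
    then have "m0 \<le> muB - r^2 * muB" by (simp add: algebra_simps)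
    then show ?thesis using small1 m0_pos by linarith
  qed
  have t4: "(m0/2) * (norm a)^2 \<le> (muB - DD - r^2 * muB) * hA"
    using k hA m0_pos by (intro mult_mono) auto
  have t3: "(muB - DD) * hA - r^2 * hA * muB = (muB - DD - r^2 * muB) * hA" by (simp add: algebra_simps)
  have t5: "2 * ((norm a * R0 / (1 - R0)) * DD) = (2 * R0 / (1 - R0)) * DD * norm a" by (simp add: algebra_simps)
  show ?thesis using F t1 t2 t3 t4 t5 by linarith
qed

lemma UB:
  assumes a: "norm (a::complex^'n) < 1" and small1: "DD \<le> m0 / 20" and F: "Fb E a \<le> 0"
  shows "norm a \<le> C1 * DD"
proof (cases "norm a = 0")
  case True then show ?thesis using C1_nonneg DD_nonneg by simp
next
  case False
  then have ap: "0 < norm a" by simp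
  define K where "K = (2 * R0 / (1 - R0)) * DD"
  have "(m0/2) * (norm a)^2 \<le> K * norm a" using LB[OF a small1] F unfolding K_def by linarith
  then have "((m0/2) * norm a) * norm a \<le> K * norm a" by (simp add: power2_eq_square mult.assoc)
  then have "(m0/2) * norm a \<le> K" using ap by (rule mult_right_le_imp_le)
  then have "norm a \<le> K / (m0/2)" using m0_pos by (simp add: le_divide_eq mult.commute)
  also have "K / (m0/2) = C1 * DD" unfolding K_def C1_def using m0_pos R0_pos rr by (simp add: field_simps)
  finally show ?thesis .
qed

lemma muE_pos:
  assumes small1: "DD \<le> m0 / 20"
  shows "0 < mu E"
proof -
  have "m0 \<le> mu (ball (0::complex^'n) r) * 1"
  proof -
    have "mu (ball (0::complex^'n) r) * (1 - \<rho>p^2) \<le> mu (ball (0::complex^'n) r) * 1"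
      using muB_pos rho by (intro mult_left_mono) auto
    then show ?thesis using muB_m0 by linarith
  qed
  then show ?thesis using mu_cmp small1 m0_pos by (simp add: abs_le_iff)
qed

lemma Fb_cont:
  assumes small1: "DD \<le> m0 / 20"
  shows "continuous_on (cball 0 eta) (Fb E)"
proof -
  have c1: "continuous_on (cball (0::complex^'n) eta) (\<lambda>a. - mu E * ln (1 - (norm a)^2))"
  proof (intro continuous_on_mult continuous_on_const continuous_on_ln continuous_on_diff
      continuous_on_power continuous_on_norm continuous_on_id ballI)
    fix a :: "complex^'n" assume "a \<in> cball 0 eta"
    then have "norm a < 1" using eta_le by simp
    then show "1 - (norm a)^2 \<noteq> 0" using nsq[of a] by simp
  qed
  have L: "(2 * mu E)-lipschitz_on (cball (0::complex^'n) eta) (Gam E)"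
  proof (rule lipschitz_onI)
    fix x y :: "complex^'n" assume x: "x \<in> cball 0 eta" and y: "y \<in> cball 0 eta"
    have "norm x \<le> 1/2" "norm y \<le> 1/2" using x y eta_le by auto
    then have "\<bar>Gam E x - Gam E y\<bar> \<le> 2 * norm (x - y) * mu E" by (rule LIP)
    then show "dist (Gam E x) (Gam E y) \<le> 2 * mu E * dist x y"
      by (simp add: dist_real_def dist_norm mult_ac)
  next
    show "0 \<le> 2 * mu E" using muE_pos[OF small1] by simp
  qed
  have c2: "continuous_on (cball (0::complex^'n) eta) (Gam E)"
    using L by (rule lipschitz_on_continuous_on)
  have "continuous_on (cball (0::complex^'n) eta) (\<lambda>a. - mu E * ln (1 - (norm a)^2) + 2 * Gam E a)"
    by (intro continuous_on_add c1 continuous_on_mult continuous_on_const c2)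
  then show ?thesis unfolding Fb_def[abs_def] .
qed

end

context bsetup begin

lemma exists_min:
  assumes small1: "DD \<le> m0 / 20" and small2: "C1 * DD \<le> eta"
  shows "\<exists>a0. norm a0 < 1 \<and> (\<forall>b. norm b < 1 \<longrightarrow> Fb E a0 \<le> Fb E b)"
proof -
  have "\<exists>x\<in>cball (0::complex^'n) eta. \<forall>y\<in>cball 0 eta. Fb E x \<le> Fb E y"
    using eta_le by (intro continuous_attains_inf compact_cball Fb_cont[OF small1]) auto
  then obtain a0 :: "complex^'n" where a0: "a0 \<in> cball 0 eta" and mn: "\<forall>y\<in>cball 0 eta. Fb E a0 \<le> Fb E y"
    by blast
  have a01: "norm a0 < 1" using a0 eta_le by simp
  have F0: "Fb E a0 \<le> 0" using mn[rule_format, of 0] eta_le by (simp add: Fb_zero)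
  have "\<forall>b. norm b < 1 \<longrightarrow> Fb E a0 \<le> Fb E b"
  proof (intro allI impI)
    fix b :: "complex^'n" assume b: "norm b < 1"
    show "Fb E a0 \<le> Fb E b"
    proof (rule ccontr)
      assume "\<not> Fb E a0 \<le> Fb E b"
      then have "Fb E b \<le> 0" using F0 by linarith
      then have "norm b \<le> C1 * DD" by (rule UB[OF b small1])
      then have "b \<in> cball 0 eta" using small2 by simp
      then show False using mn \<open>\<not> Fb E a0 \<le> Fb E b\<close> by blast
    qed
  qed
  then show ?thesis using a01 by blast
qed

lemma unique_min:
  assumes small1: "DD \<le> m0 / 20" and small2: "C1 * DD \<le> eta"
    and a1: "norm (a1::complex^'n) < 1" "\<forall>b. norm b < 1 \<longrightarrow> Fb E a1 \<le> Fb E b"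
    and a2: "norm a2 < 1" "\<forall>b. norm b < 1 \<longrightarrow> Fb E a2 \<le> Fb E b"
  shows "a1 = a2"
proof (rule ccontr)
  assume ne: "a1 \<noteq> a2"
  define m where "m = (a1 + a2) /\<^sub>R 2"
  define muB where "muB = mu (ball (0::complex^'n) r)"
  define d2 where "d2 = (norm (a1 - a2))^2"
  define q where "q = r^2 / (1 - 2 * eta)"
  have d2p: "0 < d2" unfolding d2_def using ne by simp
  have n1: "norm a1 \<le> eta" using UB[OF a1(1) small1] a1(2)[rule_format, of 0] small2 by (simp add: Fb_zero)
  have n2: "norm a2 \<le> eta" using UB[OF a2(1) small1] a2(2)[rule_format, of 0] small2 by (simp add: Fb_zero)
  have nm: "norm m \<le> eta" unfolding m_def using n1 n2 norm_triangle_ineq[of a1 a2] by simp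
  have m1: "norm m < 1" using nm eta_le by simp
  have F1: "Fb E a1 \<le> Fb E m" using a1(2) m1 by blast
  have F2: "Fb E a2 \<le> Fb E m" using a2(2) m1 by blast
  define hdef where "hdef = - ln (1 - norm a1 ^2) - ln (1 - norm a2 ^2) + 2 * ln (1 - norm m ^2)"
  define defE where "defE = Gam E a1 + Gam E a2 - 2 * Gam E m"
  define defB where "defB = Gam (ball (0::complex^'n) r) a1 + Gam (ball 0 r) a2 - 2 * Gam (ball 0 r) m"
  have tot: "Fb E a1 + Fb E a2 - 2 * Fb E m = mu E * hdef + 2 * defE"
    unfolding Fb_def hdef_def defE_def by (simp add: algebra_simps)
  have hd: "d2 / 2 \<le> hdef" unfolding hdef_def d2_def m_def using a1(1) a2(1) by (rule h_defect)
  have deb: "\<bar>defE - defB\<bar> \<le> d2 * DD" unfolding defE_def defB_def d2_def m_def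
    using n1 n2 eta_le by (intro DEB) auto
  have dbb: "- (muB * (r^2 * d2 / (4 * (1 - 2 * eta)))) \<le> defB"
    unfolding defB_def muB_def d2_def m_def using n1 n2 by (rule DBB)
  have muE: "muB - DD \<le> mu E" using mu_cmp unfolding muB_def by (simp add: abs_le_iff)
  have mB0: "0 < muB" unfolding muB_def by (rule muB_pos)
  have t1: "(muB - DD) * (d2 / 2) \<le> mu E * hdef"
  proof (rule mult_mono)
    show "0 \<le> mu E" using muE_pos[OF small1] by simp
    show "0 \<le> d2 / 2" using d2p by simp
  qed (use muE hd in auto)
  have e1: "1 - 2 * eta = (1 + \<rho>p^2) / 2" unfolding eta_def by (simp add: field_simps)
  have pos: "0 < 1 - 2 * eta" unfolding e1 by (simp add: add_pos_nonneg)
  have t2: "muB * (r^2 * d2 / (4 * (1 - 2 * eta))) = (muB * q) * d2 / 4"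
    unfolding q_def using pos by (simp add: field_simps)
  have qb: "1 - q \<ge> (1 - \<rho>p^2) / 2"
  proof -
    have rr2: "r^2 \<le> \<rho>p^2" using rho rr by (intro power_mono) auto
    have "4 * \<rho>p^2 \<le> (1 + \<rho>p^2)^2"
      using zero_le_power2[of "1 - \<rho>p^2"] by (simp add: power2_eq_square algebra_simps)
    then have "4 * r^2 \<le> (1 + \<rho>p^2)^2" using rr2 by linarith
    have sq: "((1 + \<rho>p^2) / 2) * ((1 + \<rho>p^2) / 2) = (1 + \<rho>p^2)^2 / 4" by (simp add: power2_eq_square)
    have s0: "0 < (1 + \<rho>p^2) / 2" by (simp add: add_pos_nonneg)
    have "r^2 \<le> ((1 + \<rho>p^2) / 2) * ((1 + \<rho>p^2) / 2)" unfolding sq using \<open>4 * r^2 \<le> (1 + \<rho>p^2)^2\<close> by linarith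
    then have "q \<le> (1 + \<rho>p^2) / 2" unfolding q_def e1 using s0 by (simp add: divide_le_eq)
    then show ?thesis by simp
  qed
  have t3: "m0 / 4 \<le> muB * (1 - q) / 2"
  proof -
    have "muB * ((1 - \<rho>p^2) / 2) \<le> muB * (1 - q)" using qb mB0 by (intro mult_left_mono) auto
    then show ?thesis using muB_m0 unfolding muB_def by simp
  qed
  have t4: "d2 * (m0 / 8) \<le> d2 * (muB * (1 - q) / 2 - 5 * DD / 2)"
    using t3 small1 d2p by (intro mult_left_mono) auto
  have t5: "(muB - DD) * (d2 / 2) - 2 * ((muB * q) * d2 / 4) - 2 * (d2 * DD)
     = d2 * (muB * (1 - q) / 2 - 5 * DD / 2)" by (simp add: algebra_simps)
  have t6: "0 < d2 * (m0 / 8)" using d2p m0_pos by simp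
  have deb': "defB - d2 * DD \<le> defE" using deb by (simp add: abs_le_iff)
  have "0 < Fb E a1 + Fb E a2 - 2 * Fb E m"
    using tot t1 deb' dbb t2 t4 t5 t6 by linarith
  then show False using F1 F2 by linarith
qed

lemma core:
  assumes small1: "DD \<le> m0 / 20" and small2: "C1 * DD \<le> eta"
  shows "norm (Bar E) \<le> C1 * DD"
proof -
  define P where "P = (\<lambda>a::complex^'n. a \<in> ball 0 1 \<and> (\<forall>b\<in>ball 0 1. L_fun E a \<le> L_fun E b))"
  have PF: "P a \<longleftrightarrow> norm a < 1 \<and> (\<forall>b. norm b < 1 \<longrightarrow> Fb E a \<le> Fb E b)" for a
  proof
    assume "P a"
    then have a: "norm a < 1" and h: "\<forall>b\<in>ball 0 1. L_fun E a \<le> L_fun E b" unfolding P_def by auto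
    show "norm a < 1 \<and> (\<forall>b. norm b < 1 \<longrightarrow> Fb E a \<le> Fb E b)"
      using a h LEQ[OF a] LEQ by auto
  next
    assume h: "norm a < 1 \<and> (\<forall>b. norm b < 1 \<longrightarrow> Fb E a \<le> Fb E b)"
    then show "P a" unfolding P_def using LEQ by auto
  qed
  obtain a0 where a0: "norm a0 < 1" "\<forall>b. norm b < 1 \<longrightarrow> Fb E a0 \<le> Fb E b"
    using exists_min[OF small1 small2] by blast
  have ex1: "\<exists>!a. P a"
  proof (rule ex1I)
    show "P a0" using PF a0 by blast
    fix a assume "P a"
    then have "norm a < 1" "\<forall>b. norm b < 1 \<longrightarrow> Fb E a \<le> Fb E b" using PF by auto
    then show "a = a0" using unique_min[OF small1 small2] a0 by blast
  qed
  have "Bar E = (THE a. P a)" unfolding Bar_def P_def ..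
  then have "P (Bar E)" using theI'[OF ex1] by simp
  then have b: "norm (Bar E) < 1" "Fb E (Bar E) \<le> Fb E 0" using PF by auto
  then show ?thesis using UB[OF b(1) small1] by (simp add: Fb_zero)
qed

end

lemma ray_frontier:
  fixes A :: "(complex^'n) set" and \<rho>t :: "complex^'n \<Rightarrow> real"
  assumes fr: "frontier A = {\<rho>t \<omega> *\<^sub>R \<omega> | \<omega>. \<omega> \<in> sphere 0 1}"
    and pos: "\<And>\<omega>. \<omega> \<in> sphere 0 1 \<Longrightarrow> 0 < \<rho>t \<omega>"
    and p: "c *\<^sub>R z \<in> frontier A" and c: "0 < c" and z: "z \<noteq> 0"
  shows "c * norm z = \<rho>t (z /\<^sub>R norm z)"
proof -
  obtain \<omega> where \<omega>: "\<omega> \<in> sphere 0 1" and pe: "c *\<^sub>R z = \<rho>t \<omega> *\<^sub>R \<omega>" using p fr by auto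
  have n\<omega>: "norm \<omega> = 1" using \<omega> by simp
  have pw: "0 < \<rho>t \<omega>" using pos[OF \<omega>] .
  have np: "c * norm z = \<rho>t \<omega>" using arg_cong[OF pe, of norm] c pw n\<omega> by simp
  have "z /\<^sub>R norm z = (c *\<^sub>R z) /\<^sub>R (c * norm z)" using c by simp
  also have "\<dots> = (\<rho>t \<omega> *\<^sub>R \<omega>) /\<^sub>R \<rho>t \<omega>" using pe np by simp
  also have "\<dots> = \<omega>" using pw by simp
  finally show ?thesis using np by simp
qed

lemma seg_out:
  fixes z :: "complex^'n"
  assumes "z \<noteq> 0" "norm z \<le> 1" "p \<in> closed_segment z (z /\<^sub>R norm z)"
  shows "\<exists>s. 1 \<le> s \<and> p = s *\<^sub>R z"
proof -
  obtain u where u: "0 \<le> u" "u \<le> 1" "p = (1 - u) *\<^sub>R z + u *\<^sub>R (z /\<^sub>R norm z)"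
    using assms(3) unfolding closed_segment_def by auto
  have nz: "0 < norm z" using assms(1) by simp
  have "p = ((1 - u) + u / norm z) *\<^sub>R z" using u(3) by (simp add: scaleR_add_left divide_inverse_commute)
  moreover have "1 \<le> (1 - u) + u / norm z"
  proof -
    have "u \<le> u / norm z" using u nz assms(2) by (simp add: le_divide_eq mult_left_le)
    then show ?thesis by simp
  qed
  ultimately show ?thesis by blast
qed

lemma seg_in:
  fixes z :: "complex^'n"
  assumes "p \<in> closed_segment 0 z"
  shows "\<exists>s. 0 \<le> s \<and> s \<le> 1 \<and> p = s *\<^sub>R z"
  using assms unfolding closed_segment_def by auto

lemma sandwich:
  fixes A :: "(complex^'n) set" and \<rho>t :: "complex^'n \<Rightarrow> real"
  assumes op: "open A" and Asub: "A \<subseteq> ball 0 1"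
    and fr: "frontier A = {\<rho>t \<omega> *\<^sub>R \<omega> | \<omega>. \<omega> \<in> sphere 0 1}"
    and lo: "\<And>\<omega>. \<omega> \<in> sphere 0 1 \<Longrightarrow> c1 \<le> \<rho>t \<omega>"
    and hi: "\<And>\<omega>. \<omega> \<in> sphere 0 1 \<Longrightarrow> \<rho>t \<omega> \<le> c2"
    and c1: "0 < c1"
  shows "ball 0 c1 \<subseteq> A" "A \<subseteq> cball 0 c2"
proof -
  have pos: "\<And>\<omega>. \<omega> \<in> sphere 0 1 \<Longrightarrow> 0 < \<rho>t \<omega>"
  proof -
    fix \<omega> :: "complex^'n" assume "\<omega> \<in> sphere 0 1"
    then show "0 < \<rho>t \<omega>" using lo[of \<omega>] c1 by linarith
  qed
  have frn: "\<And>p. p \<in> frontier A \<Longrightarrow> c1 \<le> norm p \<and> norm p \<le> c2"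
  proof -
    fix p assume "p \<in> frontier A"
    then obtain \<omega> where \<omega>: "\<omega> \<in> sphere 0 1" "p = \<rho>t \<omega> *\<^sub>R \<omega>" using fr by auto
    then have "norm p = \<rho>t \<omega>" using pos[OF \<omega>(1)] by simp
    then show "c1 \<le> norm p \<and> norm p \<le> c2" using lo[OF \<omega>(1)] hi[OF \<omega>(1)] by simp
  qed
  obtain \<omega>0 :: "complex^'n" where w0: "norm \<omega>0 = 1" using vector_choose_size[of 1] by auto
  have c2: "0 < c2" using lo[of \<omega>0] hi[of \<omega>0] w0 c1 by simp
  have intA: "\<And>z. z \<in> A \<Longrightarrow> z \<notin> frontier A" using op by (simp add: frontier_def interior_open)
  show sub2: "A \<subseteq> cball 0 c2"
  proof
    fix z assume zA: "z \<in> A"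
    show "z \<in> cball 0 c2"
    proof (rule ccontr)
      assume "z \<notin> cball 0 c2"
      then have zc: "c2 < norm z" by simp
      have z1: "norm z < 1" using zA Asub by auto
      have z0: "z \<noteq> 0" using zc c2 by auto
      define u where "u = z /\<^sub>R norm z"
      have uA: "u \<notin> A" using Asub z0 unfolding u_def by auto
      have "closed_segment z u \<inter> frontier A \<noteq> {}"
        by (rule connected_Int_frontier) (use zA uA in auto)
      then obtain p where p: "p \<in> closed_segment z u" "p \<in> frontier A" by blast
      obtain s where s: "1 \<le> s" "p = s *\<^sub>R z" using seg_out[OF z0 _ p(1)[unfolded u_def]] z1 by auto
      have "norm p = s * norm z" using s by simp
      also have "\<dots> \<ge> norm z" using s by (simp add: mult_le_cancel_right1)
      finally have "c2 < norm p" using zc by simp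
      then show False using frn[OF p(2)] by simp
    qed
  qed
  have ballfr: "ball 0 c1 \<inter> frontier A = {}" using frn by force
  have dich: "ball 0 c1 \<subseteq> A \<or> ball 0 c1 \<inter> A = {}"
  proof (rule ccontr)
    assume "\<not> (ball 0 c1 \<subseteq> A \<or> ball 0 c1 \<inter> A = {})"
    then have "ball 0 c1 \<inter> A \<noteq> {}" "ball 0 c1 - A \<noteq> {}" by auto
    then have "ball 0 c1 \<inter> frontier A \<noteq> {}" by (intro connected_Int_frontier) auto
    then show False using ballfr by simp
  qed
  show "ball 0 c1 \<subseteq> A"
  proof (rule ccontr)
    assume nsub: "\<not> ball 0 c1 \<subseteq> A"
    then have disj: "ball 0 c1 \<inter> A = {}" using dich by blast
    have "\<rho>t \<omega>0 *\<^sub>R \<omega>0 \<in> frontier A" using fr w0 by auto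
    then have "A \<noteq> {}" by auto
    then obtain z where zA: "z \<in> A" by blast
    have "(0::complex^'n) \<in> ball 0 c1" using c1 by simp
    then have 0: "(0::complex^'n) \<notin> A" using disj by blast
    have z0: "z \<noteq> 0" using zA 0 by auto
    have z1: "norm z < 1" using zA Asub by auto
    have "closed_segment 0 z \<inter> frontier A \<noteq> {}"
      by (rule connected_Int_frontier) (use zA 0 in auto)
    then obtain p1 where p1: "p1 \<in> closed_segment 0 z" "p1 \<in> frontier A" by blast
    obtain t where t: "0 \<le> t" "t \<le> 1" "p1 = t *\<^sub>R z" using seg_in[OF p1(1)] by auto
    have t0: "0 < t"
    proof (rule ccontr)
      assume "\<not> 0 < t"
      then have "t = 0" using t by simp
      then show False using frn[OF p1(2)] c1 t(3) by simp
    qed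
    have t1: "t \<noteq> 1" using p1(2) intA[OF zA] t by auto
    define u where "u = z /\<^sub>R norm z"
    have uA: "u \<notin> A" using Asub z0 unfolding u_def by auto
    have "closed_segment z u \<inter> frontier A \<noteq> {}"
      by (rule connected_Int_frontier) (use zA uA in auto)
    then obtain p2 where p2: "p2 \<in> closed_segment z u" "p2 \<in> frontier A" by blast
    obtain s where s: "1 \<le> s" "p2 = s *\<^sub>R z" using seg_out[OF z0 _ p2(1)[unfolded u_def]] z1 by auto
    have s1: "s \<noteq> 1" using p2(2) intA[OF zA] s by auto
    have e1: "t * norm z = \<rho>t (z /\<^sub>R norm z)"
      by (rule ray_frontier[OF fr pos _ t0 z0]) (use p1 t in auto)
    have e2: "s * norm z = \<rho>t (z /\<^sub>R norm z)"
      by (rule ray_frontier[OF fr pos _ _ z0]) (use p2 s in auto)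
    have "t * norm z = s * norm z" using e1 e2 by simp
    then have "t = s" using z0 by simp
    then show False using t s t1 s1 by simp
  qed
qed

lemma holo_cont:
  fixes \<phi> :: "complex^'n \<Rightarrow> complex"
  assumes "holo_on (ball 0 1) \<phi>"
  shows "continuous_on (ball 0 1) \<phi>"
proof (rule continuous_at_imp_continuous_on, rule ballI)
  fix z :: "complex^'n" assume "z \<in> ball 0 1"
  then obtain D where "(\<phi> has_derivative D) (at z)" using assms unfolding holo_on_def by blast
  then show "isCont \<phi> z" by (rule has_derivative_continuous)
qed

lemma axis_linear: "linear (\<lambda>\<zeta>::complex. axis i \<zeta> :: complex^'n)"
  by (rule linearI) (auto simp: vec_eq_iff axis_def)

lemma norm_axis_c: "norm (axis i \<zeta> :: complex^'n) = norm \<zeta>"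
proof -
  have "(\<Sum>j\<in>UNIV. (norm ((axis i \<zeta> :: complex^'n) $ j))^2) = (\<Sum>j\<in>UNIV. if j = i then (norm \<zeta>)^2 else 0)"
    by (rule sum.cong) (auto simp: axis_def)
  also have "\<dots> = (norm \<zeta>)^2" by simp
  finally show ?thesis by (simp add: norm_vec_def L2_set_def)
qed

lemma axis_smult: "axis i \<zeta> = \<zeta> *s (axis i 1 :: complex^'n)"
  by (auto simp: vec_eq_iff axis_def)

lemma partial_deriv:
  assumes D: "(\<phi> has_derivative D) (at (z + axis i \<zeta>))" and hom: "\<forall>c v. D (c *s v) = c * D v"
  shows "((\<lambda>\<zeta>. \<phi> (z + axis i \<zeta> :: complex^'n)) has_field_derivative D (axis i 1)) (at \<zeta>)"
proof -
  have bl: "bounded_linear (\<lambda>\<zeta>::complex. axis i \<zeta> :: complex^'n)"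
    using axis_linear linear_conv_bounded_linear by blast
  have "((\<lambda>\<zeta>. z + axis i \<zeta> :: complex^'n) has_derivative (\<lambda>h. axis i h)) (at \<zeta>)"
    using has_derivative_add[OF has_derivative_const[of z] bounded_linear_imp_has_derivative[OF bl]] by simp
  from has_derivative_compose[OF this D]
  have "((\<lambda>\<zeta>. \<phi> (z + axis i \<zeta>)) has_derivative (\<lambda>h. D (axis i h))) (at \<zeta>)" .
  moreover have "(\<lambda>h. D (axis i h)) = (*) (D (axis i 1))"
  proof (rule ext)
    fix h :: complex
    have e: "axis i h = h *s (axis i 1 :: complex^'n)" by (rule axis_smult)
    have "D (axis i h) = D (h *s axis i 1)" by (simp only: e)
    also have "\<dots> = h * D (axis i 1)" using hom by blast
    finally show "D (axis i h) = D (axis i 1) * h" by (simp add: mult.commute)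
  qed
  ultimately show ?thesis unfolding has_field_derivative_def by simp
qed

lemma deriv_bound:
  fixes \<phi> :: "complex^'n \<Rightarrow> complex"
  assumes holo: "holo_on (ball 0 1) \<phi>" and z: "norm z \<le> \<rho>" and \<rho>: "0 < \<rho>" "\<rho> < 1"
    and M: "\<And>w. norm w \<le> (1 + \<rho>)/2 \<Longrightarrow> norm (\<phi> w) \<le> M"
    and D: "(\<phi> has_derivative D) (at z)" and hom: "\<forall>c v. D (c *s v) = c * D v"
  shows "onorm D \<le> real CARD('n) * (M / ((1 - \<rho>)/2))"
proof -
  define s where "s = (1 - \<rho>)/2"
  have s0: "0 < s" unfolding s_def using \<rho> by simp
  have pd: "norm (D (axis i 1)) \<le> M / s" for i
  proof -
    define \<psi> where "\<psi> = (\<lambda>\<zeta>. \<phi> (z + axis i \<zeta>))"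
    have inball: "norm (z + axis i \<zeta>) < 1" if "norm \<zeta> < 1 - \<rho>" for \<zeta>
    proof -
      have "norm (axis i \<zeta> :: complex^'n) = norm \<zeta>" by (rule norm_axis_c)
      then have "norm (z + axis i \<zeta>) \<le> norm z + norm \<zeta>" using norm_triangle_ineq[of z "axis i \<zeta>"] by simp
      then show ?thesis using z that by linarith
    qed
    have hol: "\<psi> holomorphic_on ball 0 (1 - \<rho>)"
    proof -
      have "\<forall>x\<in>ball 0 (1 - \<rho>). \<exists>f'. DERIV \<psi> x :> f'"
      proof
        fix x :: complex assume "x \<in> ball 0 (1 - \<rho>)"
        then have "z + axis i x \<in> ball 0 1" using inball[of x] by simp
        then obtain Dw where Dw: "(\<phi> has_derivative Dw) (at (z + axis i x))" "\<forall>c v. Dw (c *s v) = c * Dw v"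
          using holo unfolding holo_on_def by blast
        show "\<exists>f'. DERIV \<psi> x :> f'" unfolding \<psi>_def using partial_deriv[OF Dw] by blast
      qed
      then show ?thesis by (simp add: holomorphic_on_open)
    qed
    have sub: "cball 0 s \<subseteq> ball 0 (1 - \<rho>)" unfolding s_def using \<rho> by auto
    have "norm ((deriv ^^ 1) \<psi> 0) \<le> fact 1 * M / s ^ 1"
    proof (rule Cauchy_inequality)
      have "ball 0 s \<subseteq> ball 0 (1 - \<rho>)" using sub ball_subset_cball by blast
      then show "\<psi> holomorphic_on ball 0 s" using hol holomorphic_on_subset by blast
      show "continuous_on (cball 0 s) \<psi>"
        using holomorphic_on_imp_continuous_on[OF hol] sub by (rule continuous_on_subset)
      show "0 < s" by (rule s0)
      fix x :: complex assume x: "norm (0 - x) = s"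
      have "norm (axis i x :: complex^'n) = norm x" by (rule norm_axis_c)
      then have "norm (z + axis i x) \<le> norm z + norm x" using norm_triangle_ineq[of z "axis i x"] by simp
      also have "\<dots> \<le> (1 + \<rho>) / 2" using z x unfolding s_def by simp
      finally show "norm (\<psi> x) \<le> M" unfolding \<psi>_def by (rule M)
    qed
    moreover have "deriv \<psi> 0 = D (axis i 1)"
    proof -
      have a0: "z + axis i (0::complex) = z" by (simp add: vec_eq_iff axis_def)
      have D0: "(\<phi> has_derivative D) (at (z + axis i 0))" unfolding a0 by (rule D)
      have "(\<psi> has_field_derivative D (axis i 1)) (at 0)"
        unfolding \<psi>_def by (rule partial_deriv[OF D0 hom])
      then show ?thesis by (rule DERIV_imp_deriv)
    qed
    ultimately show ?thesis by simp
  qed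
  have lin: "linear D" using D by (rule has_derivative_linear)
  show ?thesis
  proof (rule onorm_le)
    fix v :: "complex^'n"
    have "D v = D (\<Sum>i\<in>UNIV. (v$i) *s axis i 1)" by (simp add: basis_expansion)
    also have "\<dots> = (\<Sum>i\<in>UNIV. D ((v$i) *s axis i 1))" by (rule linear_sum[OF lin])
    also have "\<dots> = (\<Sum>i\<in>UNIV. v$i * D (axis i 1))" using hom by simp
    finally have "norm (D v) = norm (\<Sum>i\<in>UNIV. v$i * D (axis i 1))" by simp
    also have "\<dots> \<le> (\<Sum>i\<in>UNIV. norm (v$i * D (axis i 1)))" by (rule norm_sum)
    also have "\<dots> = (\<Sum>i\<in>UNIV. norm (v$i) * norm (D (axis i 1)))" by (simp add: norm_mult)
    also have "\<dots> \<le> (\<Sum>i\<in>(UNIV::'n set). norm v * (M / s))"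
      by (intro sum_mono mult_mono Finite_Cartesian_Product.norm_nth_le pd) auto
    also have "\<dots> = real CARD('n) * (M / s) * norm v" by simp
    finally show "norm (D v) \<le> real CARD('n) * (M / ((1 - \<rho>)/2)) * norm v" unfolding s_def .
  qed
qed

lemma c1_norm_nonneg:
  fixes \<phi> :: "complex^'n \<Rightarrow> complex"
  assumes holo: "holo_on (ball 0 1) \<phi>" and \<rho>: "0 < \<rho>" "\<rho> < 1"
  shows "0 \<le> c1_norm \<rho> \<phi>"
proof -
  have cont: "continuous_on (ball 0 1) \<phi>" by (rule holo_cont[OF holo])
  have s1: "cball 0 ((1 + \<rho>)/2) \<subseteq> (ball 0 1 :: (complex^'n) set)" using \<rho> by auto
  have "compact (\<phi> ` cball 0 ((1 + \<rho>)/2))"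
    by (rule compact_continuous_image[OF continuous_on_subset[OF cont s1] compact_cball])
  then have "bounded (\<phi> ` cball 0 ((1 + \<rho>)/2))" by (rule compact_imp_bounded)
  then obtain M where M0: "\<forall>x\<in>\<phi> ` cball 0 ((1 + \<rho>)/2). norm x \<le> M" unfolding bounded_iff by blast
  have M: "\<And>w. w \<in> cball 0 ((1 + \<rho>)/2) \<Longrightarrow> norm (\<phi> w) \<le> M" using M0 by blast
  have s2: "cball 0 \<rho> \<subseteq> cball (0::complex^'n) ((1 + \<rho>)/2)" using \<rho> by auto
  have bdd1: "bdd_above ((\<lambda>z. norm (\<phi> z)) ` cball 0 \<rho>)"
  proof (rule bdd_aboveI)
    fix x assume "x \<in> (\<lambda>z. norm (\<phi> z)) ` cball 0 \<rho>"
    then obtain z where z: "z \<in> cball 0 \<rho>" "x = norm (\<phi> z)" by blast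
    then show "x \<le> M" using M s2 by blast
  qed
  have A: "0 \<le> (SUP z\<in>cball 0 \<rho>. norm (\<phi> z))"
  proof -
    have "norm (\<phi> 0) \<le> (SUP z\<in>cball 0 \<rho>. norm (\<phi> z))" using \<rho> bdd1 by (intro cSUP_upper) auto
    then show ?thesis using norm_ge_zero order_trans by blast
  qed
  have Dz: "\<exists>D. (\<phi> has_derivative D) (at z) \<and> (\<forall>c v. D (c *s v) = c * D v)" if zc0: "z \<in> cball 0 \<rho>" for z :: "complex^'n"
  proof -
    have "z \<in> ball 0 1" using zc0 \<rho> by auto
    then show ?thesis using holo unfolding holo_on_def by blast
  qed
  have ob: "onorm (frechet_derivative \<phi> (at z)) \<le> real CARD('n) * (M / ((1 - \<rho>)/2))"
    and on0: "0 \<le> onorm (frechet_derivative \<phi> (at z))" if zc: "z \<in> cball 0 \<rho>" for z :: "complex^'n"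
  proof -
    obtain D where D: "(\<phi> has_derivative D) (at z)" "\<forall>c v. D (c *s v) = c * D v" using Dz[OF zc] by blast
    have fd: "frechet_derivative \<phi> (at z) = D" using frechet_derivative_at[OF D(1)] by simp
    show "onorm (frechet_derivative \<phi> (at z)) \<le> real CARD('n) * (M / ((1 - \<rho>)/2))"
      unfolding fd using zc \<rho> by (intro deriv_bound[OF holo _ _ _ M D]) auto
    show "0 \<le> onorm (frechet_derivative \<phi> (at z))"
      unfolding fd using has_derivative_bounded_linear[OF D(1)] by (rule onorm_pos_le)
  qed
  have bdd2: "bdd_above ((\<lambda>z. onorm (frechet_derivative \<phi> (at z))) ` cball 0 \<rho>)"
  proof (rule bdd_aboveI)
    fix x assume "x \<in> (\<lambda>z. onorm (frechet_derivative \<phi> (at z))) ` cball 0 \<rho>"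
    then obtain z where z: "z \<in> cball 0 \<rho>" "x = onorm (frechet_derivative \<phi> (at z))" by blast
    then show "x \<le> real CARD('n) * (M / ((1 - \<rho>)/2))" using ob by blast
  qed
  have B: "0 \<le> (SUP z\<in>cball 0 \<rho>. onorm (frechet_derivative \<phi> (at z)))"
  proof -
    have "onorm (frechet_derivative \<phi> (at 0)) \<le> (SUP z\<in>cball 0 \<rho>. onorm (frechet_derivative \<phi> (at z)))"
      using \<rho> bdd2 by (intro cSUP_upper) auto
    then show ?thesis using on0[of 0] \<rho> by simp
  qed
  show ?thesis unfolding c1_norm_def using A B by simp
qed

lemma A_open:
  fixes \<phi> :: "complex^'n \<Rightarrow> complex"
  assumes holo: "holo_on (ball 0 1) \<phi>" and p: "0 < p"
  shows "open (A_set p \<alpha> \<phi> t)"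
proof -
  have cont: "continuous_on (ball 0 1) \<phi>" by (rule holo_cont[OF holo])
  have c1: "continuous_on (ball (0::complex^'n) 1) (\<lambda>z. norm (1 + \<phi> z) powr p)"
    using p by (intro continuous_on_powr' continuous_on_norm continuous_on_add continuous_on_const cont) auto
  have c2: "continuous_on (ball (0::complex^'n) 1) (\<lambda>z. (1 - (norm z)^2) powr \<alpha>)"
  proof (intro continuous_on_powr' continuous_on_diff continuous_on_const continuous_on_power
      continuous_on_norm continuous_on_id ballI conjI impI)
    fix z :: "complex^'n" assume "z \<in> ball 0 1"
    then have "(norm z)^2 < 1" using nsq[of z] by simp
    then show "0 \<le> 1 - (norm z)^2" by simp
    assume "1 - (norm z)^2 = 0"
    then show "0 < \<alpha>" using \<open>(norm z)^2 < 1\<close> by simp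
  qed
  have cu: "continuous_on (ball (0::complex^'n) 1) (u_fun p \<alpha> \<phi>)"
    unfolding u_fun_def[abs_def] by (rule continuous_on_mult[OF c1 c2])
  have "open (ball 0 1 \<inter> u_fun p \<alpha> \<phi> -` {t<..})"
    by (rule continuous_open_preimage[OF cu]) auto
  moreover have "A_set p \<alpha> \<phi> t = ball 0 1 \<inter> u_fun p \<alpha> \<phi> -` {t<..}"
    unfolding A_set_def by auto
  ultimately show ?thesis by simp
qed

theorem mainTheorem8:
  fixes p \<alpha> \<rho> \<rho>m \<rho>p K :: real
  assumes "p > 0" and "\<alpha> > real CARD('n)" and "0 < \<rho>" and "\<rho> < 1"
    and "0 < \<rho>m" and "\<rho>m \<le> \<rho>p" and "\<rho>p < \<rho>" and "K \<ge> 0"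
  shows "\<exists>\<epsilon>>0. \<exists>C>0. \<forall>(\<phi> :: complex ^ 'n \<Rightarrow> complex) tm tp
           (\<rho>t :: real \<Rightarrow> complex ^ 'n \<Rightarrow> real).
     holo_on (ball 0 1) \<phi> \<and> c1_norm \<rho> \<phi> \<le> \<epsilon> \<and> tm \<le> tp \<and>
     (\<forall>t\<in>{tm..tp}.
        \<rho>m \<le> rho0 \<alpha> t \<and> rho0 \<alpha> t \<le> \<rho>p \<and>
        frontier (A_set p \<alpha> \<phi> t) = {\<rho>t t \<omega> *\<^sub>R \<omega> | \<omega>. \<omega> \<in> sphere 0 1} \<and>
        (\<forall>\<omega>\<in>sphere 0 1. \<rho>m / 2 \<le> \<rho>t t \<omega> \<and> \<rho>t t \<omega> \<le> (\<rho>p + \<rho>) / 2) \<and>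
        w1inf_le (\<lambda>\<omega>. \<rho>t t \<omega> - rho0 \<alpha> t) (K * c1_norm \<rho> \<phi>))
     \<longrightarrow> (\<forall>t\<in>{tm..tp}. norm (Bar (A_set p \<alpha> \<phi> t)) \<le> C * c1_norm \<rho> \<phi>)"
proof -
  note hp = assms(1) and h\<rho> = assms(3,4) and hm = assms(5,6,7) and hK = assms(8)
  define R0 where "R0 = (\<rho>p + \<rho>) / 2"
  define Wt where "Wt = (1 - R0^2) powr (- (real CARD('n) + 1))"
  define V where "V = unit_ball_vol (real DIM(complex^'n))"
  define m0 where "m0 = unit_ball_vol (DIM(complex^'n)) * \<rho>m ^ DIM(complex^'n) * (1 - \<rho>p^2)"
  define eta where "eta = (1 - \<rho>p^2) / 4"
  define C1 where "C1 = 4 * R0 / ((1 - R0) * m0)"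
  define \<kappa> where "\<kappa> = Wt * V * real DIM(complex^'n) * 2"
  define e0 where "e0 = min (min ((m0 / 20) / \<kappa>) (eta / (C1 * \<kappa>))) (min (\<rho>m / 2) ((\<rho> - \<rho>p) / 2))"
  define \<epsilon> where "\<epsilon> = e0 / (K + 1)"
  define C where "C = C1 * \<kappa> * K + 1"
  have R0: "\<rho>p < R0" "R0 < 1" "0 < R0" using hm h\<rho> unfolding R0_def by auto
  have R02: "0 < 1 - R0^2" using R0 power_strict_mono[of R0 1 2] by simp
  have Wt0: "0 < Wt" unfolding Wt_def using R02 by simp
  have V0: "0 < V" unfolding V_def by simp
  have N0: "0 < real DIM(complex^'n)" by simp
  have k0: "0 < \<kappa>" unfolding \<kappa>_def using Wt0 V0 N0 by simp
  have rp2: "0 < 1 - \<rho>p^2" using hm h\<rho> power_strict_mono[of \<rho>p 1 2] by simp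
  have m00: "0 < m0" unfolding m0_def using hm rp2 by simp
  have eta0: "0 < eta" unfolding eta_def using rp2 by simp
  have C10: "0 < C1" unfolding C1_def using R0 m00 by simp
  have e00: "0 < e0" unfolding e0_def using m00 k0 eta0 C10 hm by simp
  have eps0: "0 < \<epsilon>" unfolding \<epsilon>_def using e00 hK by simp
  have "0 \<le> C1 * \<kappa> * K" using C10 k0 hK by simp
  then have C0: "0 < C" unfolding C_def by linarith
  have Ke: "K * \<epsilon> \<le> e0"
  proof -
    have "K * \<epsilon> = e0 * (K / (K + 1))" unfolding \<epsilon>_def by simp
    also have "\<dots> \<le> e0 * 1" using e00 hK by (intro mult_left_mono) auto
    finally show ?thesis by simp
  qed
  show ?thesis
  proof (rule exI[of _ \<epsilon>], rule conjI[OF eps0], rule exI[of _ C], rule conjI[OF C0], intro allI impI ballI)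
    fix \<phi> :: "complex^'n \<Rightarrow> complex" and tm tp :: real and \<rho>t :: "real \<Rightarrow> complex^'n \<Rightarrow> real" and t :: real
    assume H: "holo_on (ball 0 1) \<phi> \<and> c1_norm \<rho> \<phi> \<le> \<epsilon> \<and> tm \<le> tp \<and>
     (\<forall>t\<in>{tm..tp}.
        \<rho>m \<le> rho0 \<alpha> t \<and> rho0 \<alpha> t \<le> \<rho>p \<and>
        frontier (A_set p \<alpha> \<phi> t) = {\<rho>t t \<omega> *\<^sub>R \<omega> | \<omega>. \<omega> \<in> sphere 0 1} \<and>
        (\<forall>\<omega>\<in>sphere 0 1. \<rho>m / 2 \<le> \<rho>t t \<omega> \<and> \<rho>t t \<omega> \<le> (\<rho>p + \<rho>) / 2) \<and>
        w1inf_le (\<lambda>\<omega>. \<rho>t t \<omega> - rho0 \<alpha> t) (K * c1_norm \<rho> \<phi>))"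
      and tI: "t \<in> {tm..tp}"
    have holo: "holo_on (ball 0 1) \<phi>" and ce: "c1_norm \<rho> \<phi> \<le> \<epsilon>" using H by auto
    define c where "c = c1_norm \<rho> \<phi>"
    define r where "r = rho0 \<alpha> t"
    define \<delta> where "\<delta> = K * c"
    have c0: "0 \<le> c" unfolding c_def by (rule c1_norm_nonneg[OF holo h\<rho>])
    have ht: "\<rho>m \<le> r" "r \<le> \<rho>p" "frontier (A_set p \<alpha> \<phi> t) = {\<rho>t t \<omega> *\<^sub>R \<omega> | \<omega>. \<omega> \<in> sphere 0 1}"
      "\<forall>\<omega>\<in>sphere 0 1. \<rho>m / 2 \<le> \<rho>t t \<omega> \<and> \<rho>t t \<omega> \<le> (\<rho>p + \<rho>) / 2"
      "w1inf_le (\<lambda>\<omega>. \<rho>t t \<omega> - r) \<delta>"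
      using H tI unfolding r_def \<delta>_def c_def by auto
    have d0: "0 \<le> \<delta>" unfolding \<delta>_def using hK c0 by simp
    have de: "\<delta> \<le> e0"
    proof -
      have "\<delta> \<le> K * \<epsilon>" unfolding \<delta>_def c_def using ce hK by (intro mult_left_mono) auto
      then show ?thesis using Ke by linarith
    qed
    have de1: "\<delta> \<le> \<rho>m / 2" "\<delta> \<le> (\<rho> - \<rho>p) / 2" "\<kappa> * \<delta> \<le> m0 / 20" "C1 * (\<kappa> * \<delta>) \<le> eta"
    proof -
      show "\<delta> \<le> \<rho>m / 2" "\<delta> \<le> (\<rho> - \<rho>p) / 2" using de unfolding e0_def by auto
      have "\<delta> \<le> (m0 / 20) / \<kappa>" using de unfolding e0_def by auto
      then show "\<kappa> * \<delta> \<le> m0 / 20" using k0 by (simp add: le_divide_eq mult.commute)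
      have "\<delta> \<le> eta / (C1 * \<kappa>)" using de unfolding e0_def by auto
      then show "C1 * (\<kappa> * \<delta>) \<le> eta" using k0 C10 by (simp add: le_divide_eq mult.commute mult.left_commute)
    qed
    obtain a b where ab: "a + b \<le> \<delta>" "\<forall>\<omega>\<in>sphere 0 1. \<bar>\<rho>t t \<omega> - r\<bar> \<le> a"
      "\<forall>\<omega>\<in>sphere 0 1. \<forall>\<omega>'\<in>sphere 0 1. \<bar>(\<rho>t t \<omega> - r) - (\<rho>t t \<omega>' - r)\<bar> \<le> b * dist \<omega> \<omega>'"
      using ht(5) unfolding w1inf_le_def by blast
    obtain \<omega>0 :: "complex^'n" where w0: "norm \<omega>0 = 1" using vector_choose_size[of 1] by auto
    have b0: "0 \<le> b"
    proof -
      have "\<bar>(\<rho>t t \<omega>0 - r) - (\<rho>t t (- \<omega>0) - r)\<bar> \<le> b * dist \<omega>0 (- \<omega>0)"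
        using ab(3) w0 by auto
      moreover have "dist \<omega>0 (- \<omega>0) = 2"
      proof -
        have "dist \<omega>0 (- \<omega>0) = norm ((2::real) *\<^sub>R \<omega>0)" by (simp only: dist_norm diff_minus_eq_add scaleR_2)
        also have "\<dots> = 2" using w0 by (simp only: norm_scaleR)
        finally show ?thesis .
      qed
      ultimately have "\<bar>(\<rho>t t \<omega>0 - r) - (\<rho>t t (- \<omega>0) - r)\<bar> \<le> b * 2" by simp
      then have "0 \<le> b * 2"
        using abs_ge_zero[of "(\<rho>t t \<omega>0 - r) - (\<rho>t t (- \<omega>0) - r)"] by linarith
      then show ?thesis by simp
    qed
    have ad: "a \<le> \<delta>" using ab(1) b0 by linarith
    have lo: "\<And>\<omega>. \<omega> \<in> sphere 0 1 \<Longrightarrow> r - \<delta> \<le> \<rho>t t \<omega>"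
    proof -
      fix \<omega> :: "complex^'n" assume "\<omega> \<in> sphere 0 1"
      then have "\<bar>\<rho>t t \<omega> - r\<bar> \<le> a" using ab(2) by blast
      then show "r - \<delta> \<le> \<rho>t t \<omega>" using ad by (simp add: abs_le_iff)
    qed
    have hi: "\<And>\<omega>. \<omega> \<in> sphere 0 1 \<Longrightarrow> \<rho>t t \<omega> \<le> r + \<delta>"
    proof -
      fix \<omega> :: "complex^'n" assume "\<omega> \<in> sphere 0 1"
      then have "\<bar>\<rho>t t \<omega> - r\<bar> \<le> a" using ab(2) by blast
      then show "\<rho>t t \<omega> \<le> r + \<delta>" using ad by (simp add: abs_le_iff)
    qed
    let ?A = "A_set p \<alpha> \<phi> t"
    have opA: "open ?A" by (rule A_open[OF holo hp])
    have Asub: "?A \<subseteq> ball 0 1" unfolding A_set_def by auto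
    have r1p: "0 < r - \<delta>" using ht(1) de1 hm by linarith
    have sw: "ball 0 (r - \<delta>) \<subseteq> ?A" "?A \<subseteq> cball 0 (r + \<delta>)"
      by (rule sandwich[OF opA Asub ht(3) lo hi r1p], assumption+)+
    have Am: "?A \<in> sets lborel" using opA by simp
    interpret bs: bsetup ?A r "r - \<delta>" "r + \<delta>" R0 \<rho>m \<rho>p
    proof (unfold_locales)
      show "?A \<in> sets lborel" by (rule Am)
      show "ball 0 (r - \<delta>) \<subseteq> ?A" by (rule sw(1))
      show "?A \<subseteq> cball 0 (r + \<delta>)" by (rule sw(2))
      show "0 \<le> r - \<delta>" using r1p by simp
      show "r - \<delta> \<le> r" using d0 by simp
      show "r \<le> r + \<delta>" using d0 by simp
      show "r + \<delta> \<le> R0" using ht(2) de1(2) unfolding R0_def by simp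
      show "R0 < 1" by (rule R0(2))
      show "0 < \<rho>m" by (rule hm(1))
      show "\<rho>m \<le> r" by (rule ht(1))
      show "r \<le> \<rho>p" by (rule ht(2))
      show "\<rho>p < 1" using hm h\<rho> by simp
    qed
    have eqs: "bs.Wt = Wt" "bs.m0 = m0" "bs.eta = eta" "bs.C1 = C1"
      unfolding bs.Wt_def Wt_def bs.m0_def m0_def bs.eta_def eta_def bs.C1_def C1_def by simp_all
    have DDb: "bs.DD \<le> \<kappa> * \<delta>"
    proof -
      have "bs.DD = Wt * (V * (r + \<delta>) ^ DIM(complex^'n) - V * (r - \<delta>) ^ DIM(complex^'n))"
        unfolding bs.DD_def bs.Dl_def eqs V_def using r1p d0
        by (simp add: content_ball0 content_cball0)
      also have "\<dots> = Wt * V * ((r + \<delta>) ^ DIM(complex^'n) - (r - \<delta>) ^ DIM(complex^'n))"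
        by (simp add: algebra_simps)
      also have "\<dots> \<le> Wt * V * (real DIM(complex^'n) * ((r + \<delta>) - (r - \<delta>)))"
        using Wt0 V0 r1p d0 ht de1 R0 unfolding R0_def
        by (intro mult_left_mono pow_diff_le) auto
      also have "\<dots> = \<kappa> * \<delta>" unfolding \<kappa>_def by (simp add: algebra_simps)
      finally show ?thesis .
    qed
    have s1: "bs.DD \<le> bs.m0 / 20" using DDb de1 eqs by linarith
    have s2: "bs.C1 * bs.DD \<le> bs.eta"
    proof -
      have "C1 * bs.DD \<le> C1 * (\<kappa> * \<delta>)" using DDb C10 by (intro mult_left_mono) auto
      then show ?thesis unfolding eqs using de1 by linarith
    qed
    have "norm (Bar ?A) \<le> bs.C1 * bs.DD" by (rule bs.core[OF s1 s2])
    also have "\<dots> \<le> C1 * (\<kappa> * \<delta>)" using DDb C10 eqs by (simp add: mult_left_mono)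
    also have "\<dots> = (C1 * \<kappa> * K) * c" unfolding \<delta>_def by (simp add: mult_ac)
    also have "\<dots> \<le> C * c" unfolding C_def using c0 by (intro mult_right_mono) auto
    finally have "norm (Bar ?A) \<le> C * c" .
    then show "norm (Bar ?A) \<le> C * c1_norm \<rho> \<phi>" by (simp add: c_def)
  qed
qed

end
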